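(* Suppose $p\neq2$, let $n\ge1$, $\alpha,\beta_1,\dots,\beta_n\in\widehat{\mathbb{F}_q^\times}$ with $\beta_i\neq\varepsilon$ for all $i$. For $\lambda_1,\dots,\lambda_n\in\mathbb{F}_q$ with $\sum_{i=1}^n\lambda_i\neq-1$, $$F_C^{(n)}\!\left({\alpha;\alpha\phi\atop\beta_1\phi,\dots,\beta_n\phi};\lambda_1^2,\dots,\lambda_n^2\right)=\overline{\alpha}^2\Big(1+\sum_{i=1}^n\lambda_i\Big)F_A^{(n)}\!\left({\alpha^2;\beta_1,\dots,\beta_n\atop\beta_1^2,\dots,\beta_n^2};\frac{2\lambda_1}{1+\sum_i\lambda_i},\dots,\frac{2\lambda_n}{1+\sum_i\lambda_i}\right).$$
   Context: $\mathbb{F}_q$ is a finite field with $q$ elements and characteristic $p$. $\widehat{\mathbb{F}_q^\times}$ is the group of multiplicative characters $\mathbb{F}_q^\times\to\overline{\mathbb{Q}}^\times$, $\varepsilon$ the trivial character, $\phi$ the quadratic character; every character $\eta$ (including $\varepsilon$) is extended by $\eta(0)=0$; $\overline{\eta}=\eta^{-1}$, and $\overline{\alpha}^2=\overline{\alpha}\,\overline{\alpha}$; $\delta(\eta)=1$ if $\eta=\varepsilon$, else $0$. $\psi$ is a fixed non-trivial additive character. $g(\eta)=-\sum_{x\in\mathbb{F}_q^\times}\psi(x)\eta(x)$, $g^\circ(\eta)=q^{\delta(\eta)}g(\eta)$, $(\alpha)_\nu=g(\alpha\nu)/g(\alpha)$, $(\alpha)^\circ_\nu=g^\circ(\alpha\nu)/g^\circ(\alpha)$.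 For $\lambda_i\in\mathbb{F}_q$, with sums over $\nu_1,\dots,\nu_n\in\widehat{\mathbb{F}_q^\times}$, $F_A^{(n)}\!\left({\alpha;\beta_1,\dots,\beta_n\atop\gamma_1,\dots,\gamma_n};\lambda\right)=\frac{1}{(1-q)^n}\sum\frac{(\alpha)_{\nu_1\cdots\nu_n}\prod_i(\beta_i)_{\nu_i}}{\prod_i(\gamma_i)^\circ_{\nu_i}(\varepsilon)^\circ_{\nu_i}}\prod_i\nu_i(\lambda_i)$, $F_C^{(n)}\!\left({\alpha;\beta\atop\gamma_1,\dots,\gamma_n};\lambda\right)=\frac{1}{(1-q)^n}\sum\frac{(\alpha)_{\nu_1\cdots\nu_n}(\beta)_{\nu_1\cdots\nu_n}}{\prod_i(\gamma_i)^\circ_{\nu_i}(\varepsilon)^\circ_{\nu_i}}\prod_i\nu_i(\lambda_i)$. *)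

theory Defs
  imports "HOL-Analysis.Analysis"
begin

text \<open>Multiplicative characters of the finite field 'a, with values in the complex
numbers (containing the algebraic numbers), extended by 0 at 0.\<close>
definition mchars :: "('a::{finite,field} \<Rightarrow> complex) set" where
  "mchars = {c. c 0 = 0 \<and> (\<forall>x. x \<noteq> 0 \<longrightarrow> c x \<noteq> 0) \<and> (\<forall>x y. c (x * y) = c x * c y)}"

definition chmul :: "('a::{finite,field} \<Rightarrow> complex) \<Rightarrow> ('a \<Rightarrow> complex) \<Rightarrow> 'a \<Rightarrow> complex" where
  "chmul \<alpha> \<beta> = (\<lambda>x. \<alpha> x * \<beta> x)"

definition chinv :: "('a::{finite,field} \<Rightarrow> complex) \<Rightarrow> 'a \<Rightarrow> complex" where
  "chinv \<alpha> = (\<lambda>x. inverse (\<alpha> x))"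

definition eps :: "'a::{finite,field} \<Rightarrow> complex" where
  "eps = (\<lambda>x. if x = 0 then 0 else 1)"

definition qchar :: "'a::{finite,field} \<Rightarrow> complex" where
  "qchar = (\<lambda>x. if x = 0 then 0 else if (\<exists>y. y ^ 2 = x) then 1 else -1)"

definition nontriv_add_char :: "('a::{finite,field} \<Rightarrow> complex) \<Rightarrow> bool" where
  "nontriv_add_char \<psi> \<longleftrightarrow> (\<forall>x. \<psi> x \<noteq> 0) \<and> (\<forall>x y. \<psi> (x + y) = \<psi> x * \<psi> y) \<and> (\<exists>x. \<psi> x \<noteq> 1)"

definition gauss :: "('a::{finite,field} \<Rightarrow> complex) \<Rightarrow> ('a \<Rightarrow> complex) \<Rightarrow> complex" where
  "gauss \<psi> \<eta> = - (\<Sum>x\<in>UNIV - {0}. \<psi> x * \<eta> x)"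

definition gauss0 :: "('a::{finite,field} \<Rightarrow> complex) \<Rightarrow> ('a \<Rightarrow> complex) \<Rightarrow> complex" where
  "gauss0 \<psi> \<eta> = of_nat CARD('a) ^ (if \<eta> = eps then 1 else 0) * gauss \<psi> \<eta>"

definition poch :: "('a::{finite,field} \<Rightarrow> complex) \<Rightarrow> ('a \<Rightarrow> complex) \<Rightarrow> ('a \<Rightarrow> complex) \<Rightarrow> complex" where
  "poch \<psi> \<alpha> \<nu> = gauss \<psi> (chmul \<alpha> \<nu>) / gauss \<psi> \<alpha>"

definition poch0 :: "('a::{finite,field} \<Rightarrow> complex) \<Rightarrow> ('a \<Rightarrow> complex) \<Rightarrow> ('a \<Rightarrow> complex) \<Rightarrow> complex" where
  "poch0 \<psi> \<alpha> \<nu> = gauss0 \<psi> (chmul \<alpha> \<nu>) / gauss0 \<psi> \<alpha>"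

definition chprod :: "nat \<Rightarrow> (nat \<Rightarrow> 'a::{finite,field} \<Rightarrow> complex) \<Rightarrow> 'a \<Rightarrow> complex" where
  "chprod n \<nu> = (\<lambda>x. \<Prod>i\<in>{1..n}. \<nu> i x)"

definition FA :: "('a::{finite,field} \<Rightarrow> complex) \<Rightarrow> nat \<Rightarrow> ('a \<Rightarrow> complex) \<Rightarrow>
    (nat \<Rightarrow> 'a \<Rightarrow> complex) \<Rightarrow> (nat \<Rightarrow> 'a \<Rightarrow> complex) \<Rightarrow> (nat \<Rightarrow> 'a) \<Rightarrow> complex" where
  "FA \<psi> n \<alpha> \<beta> \<gamma> z = 1 / (1 - of_nat CARD('a)) ^ n *
     (\<Sum>\<nu>\<in>{1..n} \<rightarrow>\<^sub>E mchars.
        poch \<psi> \<alpha> (chprod n \<nu>) * (\<Prod>i\<in>{1..n}. poch \<psi> (\<beta> i) (\<nu> i))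
        / (\<Prod>i\<in>{1..n}. poch0 \<psi> (\<gamma> i) (\<nu> i) * poch0 \<psi> eps (\<nu> i))
        * (\<Prod>i\<in>{1..n}. \<nu> i (z i)))"

definition FC :: "('a::{finite,field} \<Rightarrow> complex) \<Rightarrow> nat \<Rightarrow> ('a \<Rightarrow> complex) \<Rightarrow>
    ('a \<Rightarrow> complex) \<Rightarrow> (nat \<Rightarrow> 'a \<Rightarrow> complex) \<Rightarrow> (nat \<Rightarrow> 'a) \<Rightarrow> complex" where
  "FC \<psi> n \<alpha> \<beta> \<gamma> z = 1 / (1 - of_nat CARD('a)) ^ n *
     (\<Sum>\<nu>\<in>{1..n} \<rightarrow>\<^sub>E mchars.
        poch \<psi> \<alpha> (chprod n \<nu>) * poch \<psi> \<beta> (chprod n \<nu>)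
        / (\<Prod>i\<in>{1..n}. poch0 \<psi> (\<gamma> i) (\<nu> i) * poch0 \<psi> eps (\<nu> i))
        * (\<Prod>i\<in>{1..n}. \<nu> i (z i)))"

end

theory Submission
  imports Defs "HOL-Algebra.Multiplicative_Group"
begin

definition fring :: "'a::field ring" where
  "fring = \<lparr>carrier = UNIV, monoid.mult = (\<lambda>x y. x * y), one = 1, ring.zero = 0, add = (\<lambda>x y. x + y)\<rparr>"

lemma field_fring: "field (fring :: 'a::field ring)"
proof -
  have "\<exists>y. x + y = 0" for x :: 'a
    using add.right_inverse by blast
  moreover have "x \<noteq> 0 \<Longrightarrow> \<exists>y. x * y = 1" for x :: 'a
    by (rule exI[of _ "inverse x"]) auto
  ultimately show ?thesis
    unfolding fring_def using add.right_inverse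
    by unfold_locales (auto simp:algebra_simps Units_def)
qed

lemma fring_pow: "x [^]\<^bsub>fring\<^esub> (i::nat) = (x::'a::field) ^ i"
proof (induction i)
  case 0 then show ?case by (simp add: fring_def)
next
  case (Suc i)
  interpret field "fring :: 'a ring" by (rule field_fring)
  show ?case using Suc by (simp add: fring_def mult.commute)
qed

lemma gen_exists: "\<exists>g::'a::{finite,field}. g \<noteq> 0 \<and> (\<forall>x. x \<noteq> 0 \<longrightarrow> (\<exists>i::nat. x = g ^ i))"
proof -
  interpret field "fring :: 'a ring" by (rule field_fring)
  have "\<exists>a\<in>carrier (mult_of (fring::'a ring)). carrier (mult_of fring) = {a [^]\<^bsub>fring\<^esub> i |i::nat. i \<in> UNIV}"
    by (rule finite_field_mult_group_has_gen) (simp add: fring_def)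
  then obtain a where a: "a \<in> carrier (mult_of (fring::'a ring))"
     and c: "carrier (mult_of (fring::'a ring)) = {a [^]\<^bsub>fring\<^esub> i |i::nat. i \<in> UNIV}" by blast
  have "carrier (mult_of (fring::'a ring)) = UNIV - {0}" by (simp add: fring_def)
  with a c show ?thesis by (auto simp: fring_pow)
qed


definition gen :: "'a::{finite,field}" where
  "gen = (SOME g. g \<noteq> 0 \<and> (\<forall>x. x \<noteq> 0 \<longrightarrow> (\<exists>i::nat. x = g ^ i)))"

lemma gen_nz: "gen \<noteq> 0" and gen_pow: "x \<noteq> 0 \<Longrightarrow> \<exists>i. x = gen ^ i"
  using someI_ex[OF gen_exists] unfolding gen_def by blast+

lemma card_nonzero: "card (UNIV - {0::'a::{finite,field}}) = CARD('a) - 1"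
  by (simp add: card_Diff_singleton)

lemma m_pos: "CARD('a::{finite,field}) - 1 > 0"
proof -
  have "{0::'a, 1} \<subseteq> UNIV" by simp
  hence "card {0::'a,1} \<le> CARD('a)" by (intro card_mono) auto
  thus ?thesis by simp
qed

lemma pow_m: fixes x :: "'a::{finite,field}" assumes "x \<noteq> 0" shows "x ^ (CARD('a) - 1) = 1"
proof -
  let ?S = "UNIV - {0::'a}"
  have "(\<Prod>y\<in>?S. x * y) = x ^ card ?S * \<Prod>?S"
    by (simp add: prod.distrib)
  also have "(\<Prod>y\<in>?S. x * y) = (\<Prod>y\<in>?S. y)"
    by (rule prod.reindex_bij_witness[of _ "\<lambda>y. y / x" "\<lambda>y. x * y"]) (use assms in auto)
  finally have "x ^ card ?S * \<Prod>?S = 1 * \<Prod>?S" by simp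
  moreover have "\<Prod>?S \<noteq> 0" by (simp)
  ultimately show ?thesis by (simp add: card_nonzero)
qed

lemma pow_mod_m: fixes x :: "'a::{finite,field}" assumes "x \<noteq> 0"
  shows "x ^ i = x ^ (i mod (CARD('a) - 1))"
proof -
  let ?m = "CARD('a) - 1"
  have "x ^ i = x ^ (?m * (i div ?m) + i mod ?m)" by simp
  also have "\<dots> = (x ^ ?m) ^ (i div ?m) * x ^ (i mod ?m)" by (simp only: power_add power_mult)
  finally show ?thesis using pow_m[OF assms] by simp
qed

lemma gen_image: "(\<lambda>i. gen ^ i) ` {..< CARD('a::{finite,field}) - 1} = UNIV - {0::'a}"
proof
  show "(\<lambda>i. gen ^ i) ` {..< CARD('a) - 1} \<subseteq> UNIV - {0::'a}" using gen_nz by auto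
  show "UNIV - {0::'a} \<subseteq> (\<lambda>i. gen ^ i) ` {..< CARD('a) - 1}"
  proof
    fix x :: 'a assume "x \<in> UNIV - {0}"
    then obtain i where "x = gen ^ i" using gen_pow by auto
    hence "x = gen ^ (i mod (CARD('a) - 1))" using pow_mod_m[OF gen_nz] by simp
    moreover have "i mod (CARD('a) - 1) < CARD('a) - 1" using m_pos[where 'a='a] by simp
    ultimately show "x \<in> (\<lambda>i. gen ^ i) ` {..< CARD('a) - 1}" by auto
  qed
qed

lemma gen_inj: "inj_on (\<lambda>i. (gen::'a::{finite,field}) ^ i) {..< CARD('a) - 1}"
  by (rule eq_card_imp_inj_on) (simp, metis gen_image card_nonzero card_lessThan)

lemma gen_pow_eq: "(gen::'a::{finite,field}) ^ i = gen ^ j \<longleftrightarrow> i mod (CARD('a) - 1) = j mod (CARD('a) - 1)"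
proof -
  have a: "(gen::'a) ^ i = gen ^ (i mod (CARD('a) - 1))" by (rule pow_mod_m[OF gen_nz])
  have b: "(gen::'a) ^ j = gen ^ (j mod (CARD('a) - 1))" by (rule pow_mod_m[OF gen_nz])
  have c: "i mod (CARD('a) - 1) < CARD('a) - 1" "j mod (CARD('a) - 1) < CARD('a) - 1"
    using m_pos[where 'a='a] by simp_all
  show ?thesis unfolding a b
    using inj_onD[OF gen_inj[where 'a='a], of "i mod (CARD('a) - 1)" "j mod (CARD('a) - 1)"] c by auto
qed

definition dlog :: "'a::{finite,field} \<Rightarrow> nat" where
  "dlog x = (THE i. i < CARD('a) - 1 \<and> gen ^ i = x)"

lemma dlog: fixes x :: "'a::{finite,field}" assumes "x \<noteq> 0"
  shows "dlog x < CARD('a) - 1" "gen ^ dlog x = x"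
proof -
  have "x \<in> (\<lambda>i. gen ^ i) ` {..< CARD('a) - 1}" using assms gen_image by blast
  then obtain i where i0: "i \<in> {..< CARD('a) - 1}" "x = gen ^ i" by (rule imageE)
  have i: "i < CARD('a) - 1" "gen ^ i = x" using i0 by auto
  have u: "j = i" if "j < CARD('a) - 1" "gen ^ j = x" for j
    using inj_onD[OF gen_inj[where 'a='a], of j i] that i by simp
  have "dlog x = i" unfolding dlog_def
  proof (rule the_equality)
    show "i < CARD('a) - 1 \<and> gen ^ i = x" using i by simp
    show "\<And>j. j < CARD('a) - 1 \<and> gen ^ j = x \<Longrightarrow> j = i" using u by blast
  qed
  thus "dlog x < CARD('a) - 1" "gen ^ dlog x = x" using i by simp_all
qed

lemma dlog_pow: "dlog ((gen::'a::{finite,field}) ^ i) = i mod (CARD('a) - 1)"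
proof -
  have nz: "(gen::'a) ^ i \<noteq> 0" using gen_nz[where 'a='a] by simp
  have "(gen::'a) ^ dlog ((gen::'a) ^ i) = (gen::'a) ^ i" using dlog(2)[OF nz] .
  hence "dlog ((gen::'a) ^ i) mod (CARD('a) - 1) = i mod (CARD('a) - 1)" by (simp only: gen_pow_eq)
  moreover have "dlog ((gen::'a) ^ i) mod (CARD('a) - 1) = dlog ((gen::'a) ^ i)"
    using dlog(1)[OF nz] by (rule mod_less)
  ultimately show ?thesis by simp
qed

lemma cpow_mod: fixes w :: complex assumes "w ^ k = 1" shows "w ^ i = w ^ (i mod k)"
proof -
  have "w ^ i = w ^ (k * (i div k) + i mod k)" by simp
  also have "\<dots> = (w ^ k) ^ (i div k) * w ^ (i mod k)" by (simp only: power_add power_mult)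
  finally show ?thesis using assms by simp
qed

definition char_of :: "complex \<Rightarrow> 'a::{finite,field} \<Rightarrow> complex" where
  "char_of w x = (if x = 0 then 0 else w ^ dlog x)"

lemma mchars_0[simp]: "ch \<in> mchars \<Longrightarrow> ch 0 = 0" unfolding mchars_def by blast
lemma mchars_nz: "ch \<in> mchars \<Longrightarrow> x \<noteq> 0 \<Longrightarrow> ch x \<noteq> 0" unfolding mchars_def by blast
lemma mchars_mult: "ch \<in> mchars \<Longrightarrow> ch (x * y) = ch x * ch y" unfolding mchars_def by blast
lemma mcharsI: "c 0 = 0 \<Longrightarrow> (\<And>x. x \<noteq> 0 \<Longrightarrow> c x \<noteq> 0) \<Longrightarrow> (\<And>x y. c (x * y) = c x * c y) \<Longrightarrow> c \<in> mchars"
  unfolding mchars_def by blast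
lemma mchars_1[simp]: assumes "ch \<in> mchars" shows "ch 1 = 1"
proof -
  have h: "ch 1 = ch 1 * ch 1" using mchars_mult[OF assms, of 1 1, unfolded mult_1] .
  have nz: "ch 1 \<noteq> 0" using mchars_nz[OF assms, of 1] by simp
  from h have "ch 1 = 0 \<or> ch 1 = 1" by (subst (asm) mult_cancel_left1)
  with nz show ?thesis by blast
qed

lemma char_of_mchars: fixes w :: complex assumes w: "w ^ (CARD('a::{finite,field}) - 1) = 1"
  shows "(char_of w :: 'a \<Rightarrow> complex) \<in> mchars"
proof -
  have wnz: "w \<noteq> 0"
  proof
    assume "w = 0"
    with w have "(0::complex) ^ (CARD('a) - 1) = 1" by simp
    moreover have "(0::complex) ^ (CARD('a) - 1) = 0" using m_pos[where 'a='a] by (rule zero_power)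
    ultimately show False by simp
  qed
  have "char_of w (x * y) = char_of w x * char_of w y" for x y :: 'a
  proof (cases "x = 0 \<or> y = 0")
    case False
    hence xy: "x \<noteq> 0" "y \<noteq> 0" by auto
    have "x * y = gen ^ (dlog x + dlog y)" using dlog(2)[OF xy(1)] dlog(2)[OF xy(2)] by (simp add: power_add)
    hence "dlog (x * y) = dlog ((gen::'a) ^ (dlog x + dlog y))" by simp
    also have "\<dots> = (dlog x + dlog y) mod (CARD('a) - 1)" by (rule dlog_pow)
    finally have "w ^ dlog (x * y) = w ^ ((dlog x + dlog y) mod (CARD('a) - 1))" by simp
    also have "\<dots> = w ^ (dlog x + dlog y)" using cpow_mod[OF w, of "dlog x + dlog y"] by simp
    finally show ?thesis using xy by (simp add: char_of_def power_add)
  qed (auto simp: char_of_def)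
  thus ?thesis by (intro mcharsI) (auto simp: char_of_def wnz)
qed

lemma mchars_inverse: assumes "ch \<in> mchars" shows "ch (inverse x) = inverse (ch x)"
proof (cases "x = 0")
  case False
  have "ch (inverse x) * ch x = 1" using mchars_mult[OF assms, of "inverse x" x] False assms by simp
  thus ?thesis by (metis inverse_unique mult.commute)
qed (use assms in simp)
lemma mchars_divide: "ch \<in> mchars \<Longrightarrow> ch (x / y) = ch x / ch y"
  by (simp add: divide_inverse mchars_mult mchars_inverse)
lemma mchars_power: "ch \<in> mchars \<Longrightarrow> ch (x ^ i) = ch x ^ i"
  by (induction i) (simp_all add: mchars_mult)
lemma mchars_m1: assumes "ch \<in> mchars" shows "ch (-1) * ch (-1) = 1"
  using mchars_mult[OF assms, of "-1" "-1"] assms by simp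
lemma mchars_uminus: assumes "ch \<in> mchars" shows "ch (- x) = ch (-1) * ch x"
  using mchars_mult[OF assms, of "-1" x] by simp

lemma eps_mchars[simp]: "eps \<in> mchars" by (rule mcharsI) (auto simp: eps_def)
lemma chmul_mchars[simp]: assumes "a \<in> mchars" "b \<in> mchars" shows "chmul a b \<in> mchars"
  by (rule mcharsI) (auto simp: chmul_def assms mchars_nz mchars_mult mult_ac)
lemma chinv_mchars[simp]: assumes "a \<in> mchars" shows "chinv a \<in> mchars"
  by (rule mcharsI) (auto simp: chinv_def assms mchars_nz mchars_mult)
lemma chmul_apply[simp]: "chmul a b x = a x * b x" by (simp add: chmul_def)
lemma chinv_apply[simp]: "chinv a x = inverse (a x)" by (simp add: chinv_def)
lemma eps_nz[simp]: "x \<noteq> 0 \<Longrightarrow> eps x = 1" by (simp add: eps_def)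
lemma eps_0[simp]: "eps 0 = 0" by (simp add: eps_def)
lemma chmul_eps[simp]: "a \<in> mchars \<Longrightarrow> chmul a eps = a"
  by (auto simp: fun_eq_iff eps_def)
lemma eps_chmul[simp]: "a \<in> mchars \<Longrightarrow> chmul eps a = a"
  by (auto simp: fun_eq_iff eps_def)
lemma chmul_chinv: "a \<in> mchars \<Longrightarrow> chmul a (chinv a) = eps"
  by (auto simp: fun_eq_iff eps_def mchars_nz)
lemma chmul_comm: "chmul a b = chmul b a" by (auto simp: fun_eq_iff)
lemma chmul_assoc: "chmul (chmul a b) c = chmul a (chmul b c)" by (auto simp: fun_eq_iff)
lemma chinv_chmul: "chinv (chmul a b) = chmul (chinv a) (chinv b)" by (auto simp: fun_eq_iff)
lemma chinv_eps[simp]: "chinv eps = eps" unfolding chinv_def eps_def by (rule ext) simp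

lemma mchars_char_of: assumes "ch \<in> mchars" shows "ch = char_of (ch gen)"
proof
  fix x :: 'a show "ch x = char_of (ch gen) x"
  proof (cases "x = 0")
    case False
    have "ch x = ch (gen ^ dlog x)" using dlog(2)[OF False] by simp
    thus ?thesis using False by (simp add: char_of_def mchars_power[OF assms])
  qed (use assms in \<open>simp add: char_of_def\<close>)
qed

lemma char_of_gen: fixes w :: complex assumes w: "w ^ (CARD('a::{finite,field}) - 1) = 1"
  shows "char_of w (gen :: 'a) = w"
proof -
  have "dlog ((gen::'a) ^ 1) = 1 mod (CARD('a) - 1)" by (rule dlog_pow)
  hence "dlog (gen::'a) = 1 mod (CARD('a) - 1)" by simp
  hence "w ^ dlog (gen::'a) = w ^ (1 mod (CARD('a) - 1))" by simp
  also have "\<dots> = w ^ 1" using cpow_mod[OF w, of 1] by simp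
  finally show ?thesis using gen_nz[where 'a='a] by (simp add: char_of_def)
qed

lemma bij_mchars: "bij_betw (\<lambda>ch. ch gen) (mchars :: ('a::{finite,field} \<Rightarrow> complex) set) {w. w ^ (CARD('a) - 1) = 1}"
proof (rule bij_betwI')
  fix x y :: "'a \<Rightarrow> complex" assume xy: "x \<in> mchars" "y \<in> mchars"
  show "(x gen = y gen) = (x = y)"
  proof
    assume "x gen = y gen"
    thus "x = y" using mchars_char_of[OF xy(1)] mchars_char_of[OF xy(2)] by simp
  qed simp
next
  fix x :: "'a \<Rightarrow> complex" assume x: "x \<in> mchars"
  have "x gen ^ (CARD('a) - 1) = x (gen ^ (CARD('a) - 1))" by (simp add: mchars_power[OF x])
  also have "(gen::'a) ^ (CARD('a) - 1) = 1" by (rule pow_m[OF gen_nz])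
  finally show "x gen \<in> {w. w ^ (CARD('a) - 1) = 1}" using x by simp
next
  fix w assume "w \<in> {w::complex. w ^ (CARD('a) - 1) = 1}"
  hence w: "w ^ (CARD('a) - 1) = 1" by simp
  show "\<exists>x\<in>mchars. w = x (gen::'a)"
    by (rule bexI[of _ "char_of w"]) (simp_all add: char_of_mchars[OF w] char_of_gen[OF w])
qed

lemma finite_mchars[simp]: "finite (mchars :: ('a::{finite,field} \<Rightarrow> complex) set)"
proof -
  have "finite {w::complex. w ^ (CARD('a) - 1) = 1}"
    by (rule finite_roots_unity) (use m_pos[where 'a='a] in simp)
  thus ?thesis using bij_betw_finite[OF bij_mchars[where 'a='a]] by simp
qed

lemma card_mchars: "card (mchars :: ('a::{finite,field} \<Rightarrow> complex) set) = CARD('a) - 1"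
proof -
  have "card (mchars :: ('a \<Rightarrow> complex) set) = card {w::complex. w ^ (CARD('a) - 1) = 1}"
    by (rule bij_betw_same_card[OF bij_mchars])
  also have "\<dots> = CARD('a) - 1" by (rule card_roots_unity_eq[OF m_pos])
  finally show ?thesis .
qed

lemma bijI2: assumes "\<And>x. g (f x) = x" "\<And>y. f (g y) = y" shows "bij f"
  by (rule o_bij[of g f]) (auto simp: fun_eq_iff assms)

lemma sum_bij_UNIV: "bij f \<Longrightarrow> (\<Sum>x\<in>UNIV. g (f x)) = (\<Sum>x\<in>UNIV. g x)"
  using sum.reindex_bij_betw by blast

lemma fixpoint_zero: "(s::complex) = c * s \<Longrightarrow> c \<noteq> 1 \<Longrightarrow> s = 0"
proof -
  assume "s = c * s" "c \<noteq> 1"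
  hence "(1 - c) * s = 0" by (simp add: algebra_simps)
  thus "s = 0" using \<open>c \<noteq> 1\<close> by simp
qed

lemma char_sum: fixes ch :: "'a::{finite,field} \<Rightarrow> complex" assumes "ch \<in> mchars"
  shows "(\<Sum>x\<in>UNIV. ch x) = (if ch = eps then of_nat (CARD('a) - 1) else 0)"
proof (cases "ch = eps")
  case True
  have "(\<Sum>x\<in>(UNIV::'a set). eps x) = eps (0::'a) + (\<Sum>x\<in>UNIV - {0::'a}. eps x)" by (rule sum.remove) auto
  also have "(\<Sum>x\<in>UNIV - {0::'a}. eps x) = (\<Sum>x\<in>UNIV - {0::'a}. 1)" by (rule sum.cong) auto
  finally show ?thesis using True by (simp add: card_nonzero)
next
  case False
  then obtain a where a: "ch a \<noteq> eps a" by auto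
  have a0: "a \<noteq> 0" proof assume "a = 0" thus False using a assms by simp qed
  hence a1: "ch a \<noteq> 1" using a by simp
  have "(\<Sum>x\<in>UNIV. ch x) = (\<Sum>x\<in>UNIV. ch (a * x))"
    by (rule sum_bij_UNIV[symmetric]) (rule bijI2[where g = "\<lambda>x. x / a"], use a0 in auto)
  also have "\<dots> = ch a * (\<Sum>x\<in>UNIV. ch x)" by (simp add: mchars_mult[OF assms] sum_distrib_left)
  finally have "(\<Sum>x\<in>UNIV. ch x) = 0" using a1 by (rule fixpoint_zero)
  thus ?thesis using False by simp
qed

lemma cis_pow2pi: "cis (2 * pi / real M) ^ k = cis (2 * pi * real k / real M)"
  unfolding Complex.DeMoivre by (simp add: field_simps)

lemma cis_pow_ne1: assumes "0 < k" "k < M" shows "cis (2 * pi / real M) ^ k \<noteq> 1"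
proof
  assume h: "cis (2 * pi / real M) ^ k = 1"
  have M: "M > 0" using assms by simp
  have "cis (2 * pi * real k / real M) = cis (2 * pi * real 0 / real M)"
    using h by (simp add: cis_pow2pi)
  moreover have "k \<in> {..<M}" "0 \<in> {..<M}" using assms by auto
  ultimately have "k = 0" using Complex.bij_betw_roots_unity[OF M] unfolding bij_betw_def inj_on_def by blast
  thus False using assms by simp
qed

lemma cis_pow_M: assumes "M > 0" shows "cis (2 * pi / real M) ^ M = 1"
proof -
  have "cis (2 * pi / real M) ^ M = cis (2 * pi * real M / real M)" by (rule cis_pow2pi)
  also have "\<dots> = cis (2 * pi)" using assms by simp
  also have "\<dots> = 1" by (simp add: complex_eq_iff)
  finally show ?thesis .
qed

lemma orth: fixes y :: "'a::{finite,field}"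
  shows "(\<Sum>ch\<in>mchars. ch y) = (if y = 1 then of_nat (CARD('a) - 1) else 0)"
proof (cases "y = 0")
  case True thus ?thesis by simp
next
  case y0: False
  show ?thesis
  proof (cases "y = 1")
    case True thus ?thesis by (simp add: card_mchars)
  next
    case False
    let ?M = "CARD('a) - 1"
    define ch0 :: "'a \<Rightarrow> complex" where "ch0 = char_of (cis (2 * pi / real ?M))"
    have c0: "ch0 \<in> mchars" unfolding ch0_def by (rule char_of_mchars) (rule cis_pow_M[OF m_pos])
    have d0: "dlog y \<noteq> 0"
    proof
      assume "dlog y = 0"
      hence "y = 1" using dlog(2)[OF y0] by simp
      thus False using False by simp
    qed
    have "cis (2 * pi / real ?M) ^ dlog y \<noteq> 1"
      by (rule cis_pow_ne1) (use d0 dlog(1)[OF y0] in auto)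
    hence ne: "ch0 y \<noteq> 1" unfolding ch0_def char_of_def using y0 by simp
    have "(\<Sum>ch\<in>mchars. ch y) = (\<Sum>ch\<in>mchars. chmul ch0 ch y)"
    proof (rule sum.reindex_bij_witness[of _ "chmul ch0" "chmul (chinv ch0)"])
      fix a :: "'a \<Rightarrow> complex" assume a: "a \<in> mchars"
      show "chmul (chinv ch0) (chmul ch0 a) = a"
      proof
        fix x show "chmul (chinv ch0) (chmul ch0 a) x = a x"
          using a c0 mchars_nz[OF c0, of x] by (cases "x = 0") auto
      qed
      show "chmul ch0 (chmul (chinv ch0) a) = a"
      proof
        fix x show "chmul ch0 (chmul (chinv ch0) a) x = a x"
          using a c0 mchars_nz[OF c0, of x] by (cases "x = 0") auto
      qed
    qed (use c0 mchars_nz[OF c0 y0] in auto)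
    also have "\<dots> = ch0 y * (\<Sum>ch\<in>mchars. ch y)" by (simp add: sum_distrib_left)
    finally have "(\<Sum>ch\<in>mchars. ch y) = 0" using ne by (rule fixpoint_zero)
    thus ?thesis using False by simp
  qed
qed

lemma orth2: fixes a u :: "'a::{finite,field}"
  shows "(\<Sum>ch\<in>mchars. ch a * inverse (ch u)) = (if u \<noteq> 0 \<and> a = u then of_nat (CARD('a) - 1) else 0)"
proof (cases "u = 0")
  case True thus ?thesis by simp
next
  case False
  have "(\<Sum>ch\<in>mchars. ch a * inverse (ch u)) = (\<Sum>ch\<in>mchars. ch (a * inverse u))"
    by (rule sum.cong) (simp_all add: mchars_mult mchars_inverse)
  also have "\<dots> = (if a * inverse u = 1 then of_nat (CARD('a) - 1) else 0)" by (rule orth)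
  finally show ?thesis using False by (simp add: field_simps)
qed


lemma qchar_0[simp]: "qchar 0 = 0" by (simp add: qchar_def)

lemma m_even: assumes two: "(2::'a::{finite,field}) \<noteq> 0" shows "even (CARD('a) - 1)"
proof (rule ccontr)
  assume odd: "odd (CARD('a) - 1)"
  let ?M = "CARD('a) - 1"
  have m1: "(-1::'a) \<noteq> 0" by simp
  have "(-1::'a) \<noteq> 1" using two by (metis add_eq_0_iff_both_eq_0 one_add_one equation_minus_iff zero_neq_one
      add.inverse_inverse add.commute eq_neg_iff_add_eq_0)
  have d0: "dlog (-1::'a) \<noteq> 0"
  proof
    assume "dlog (-1::'a) = 0"
    hence "(-1::'a) = 1" using dlog(2)[OF m1] by simp
    thus False using \<open>(-1::'a) \<noteq> 1\<close> by simp
  qed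
  have "(gen::'a) ^ (2 * dlog (-1::'a)) = ((gen::'a) ^ dlog (-1::'a)) ^ 2"
    by (metis power_mult mult.commute)
  also have "\<dots> = (1::'a)" using dlog(2)[OF m1] by simp
  also have "\<dots> = (gen::'a) ^ 0" by simp
  finally have "(2 * dlog (-1::'a)) mod ?M = 0 mod ?M" by (simp only: gen_pow_eq)
  hence "?M dvd 2 * dlog (-1::'a)" by auto
  moreover have "coprime ?M 2" using odd by simp
  ultimately have "?M dvd dlog (-1::'a)" by (simp add: coprime_dvd_mult_right_iff)
  thus False using dlog(1)[OF m1] d0 by (metis dvd_imp_le neq0_conv not_le)
qed

lemma sq_iff_even: assumes two: "(2::'a::{finite,field}) \<noteq> 0" and x: "(x::'a) \<noteq> 0"
  shows "(\<exists>y. y ^ 2 = x) \<longleftrightarrow> even (dlog x)"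
proof
  assume "\<exists>y. y ^ 2 = x"
  then obtain y where y: "y ^ 2 = x" by blast
  hence y0: "y \<noteq> 0" using x by auto
  have "x = gen ^ (2 * dlog y)" using y dlog(2)[OF y0] by (metis power_mult mult.commute)
  hence "dlog x = (2 * dlog y) mod (CARD('a) - 1)" using dlog_pow by metis
  thus "even (dlog x)" using m_even[OF two] by (auto intro: dvd_mod)
next
  assume "even (dlog x)"
  then obtain k where "dlog x = 2 * k" by blast
  hence "(gen ^ k) ^ 2 = x" using dlog(2)[OF x] by (metis power_mult mult.commute)
  thus "\<exists>y. y ^ 2 = x" by blast
qed

lemma qchar_char_of: assumes two: "(2::'a::{finite,field}) \<noteq> 0"
  shows "(qchar :: 'a \<Rightarrow> complex) = char_of (-1)"
proof
  fix x :: 'a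
  show "qchar x = char_of (-1) x"
    using sq_iff_even[OF two, of x] by (auto simp: qchar_def char_of_def)
qed

lemma qchar_mchars: assumes two: "(2::'a::{finite,field}) \<noteq> 0"
  shows "(qchar :: 'a \<Rightarrow> complex) \<in> mchars"
  unfolding qchar_char_of[OF two] by (rule char_of_mchars) (use m_even[OF two] in simp)

lemma qchar_sq: "x \<noteq> 0 \<Longrightarrow> qchar x * qchar x = 1"
  by (simp add: qchar_def)

lemma qchar_chmul: "chmul qchar qchar = eps"
  by (auto simp: fun_eq_iff qchar_def eps_def)

lemma qchar_chinv: "chinv qchar = qchar"
  by (auto simp: fun_eq_iff qchar_def)

lemma qchar_inverse: "inverse (qchar x) = qchar x"
  by (simp add: qchar_def)

lemma qchar_ne_eps: assumes two: "(2::'a::{finite,field}) \<noteq> 0"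
  shows "(qchar :: 'a \<Rightarrow> complex) \<noteq> eps"
proof
  assume h: "(qchar :: 'a \<Rightarrow> complex) = eps"
  have "CARD('a) - 1 \<ge> 2" using m_even[OF two] m_pos[where 'a='a] by presburger
  have "(-1::complex) ^ (CARD('a) - 1) = 1" using m_even[OF two] by simp
  hence "char_of (-1) (gen::'a) = -1"
    by (rule char_of_gen)
  hence "qchar (gen::'a) = -1" using qchar_char_of[OF two] by simp
  thus False using h gen_nz[where 'a='a] by simp
qed

lemma qchar_4: assumes two: "(2::'a::{finite,field}) \<noteq> 0" shows "qchar (4::'a) = 1"
proof -
  have "(2::'a) ^ 2 = 4" by simp
  moreover have "(4::'a) \<noteq> 0" using two by (metis mult_eq_0_iff numeral_Bit0 one_add_one power2_eq_square
     calculation zero_neq_numeral power_not_zero)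
  ultimately show ?thesis unfolding qchar_def by metis
qed

lemma sq_eps: assumes two: "(2::'a::{finite,field}) \<noteq> 0" and c: "c \<in> mchars" and h: "chmul c c = (eps :: 'a \<Rightarrow> complex)"
  shows "c = eps \<or> c = qchar"
proof -
  have "c gen * c gen = 1" using fun_cong[OF h, of gen] gen_nz[where 'a='a] by simp
  hence "c gen = 1 \<or> c gen = -1" by (metis square_eq_1_iff power2_eq_square)
  moreover have "char_of 1 = (eps :: 'a \<Rightarrow> complex)" by (auto simp: fun_eq_iff char_of_def eps_def)
  ultimately show ?thesis using mchars_char_of[OF c] qchar_char_of[OF two] by metis
qed

lemma card_sqrt: assumes two: "(2::'a::{finite,field}) \<noteq> 0"
  shows "of_nat (card {y::'a. y ^ 2 = D}) = 1 + (qchar D :: complex)"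
proof (cases "D = 0")
  case True thus ?thesis by simp
next
  case False
  show ?thesis
  proof (cases "\<exists>y. y ^ 2 = D")
    case True
    then obtain w where w: "w ^ 2 = D" by blast
    hence "w \<noteq> 0" using False by auto
    hence "w \<noteq> - w" using two by (metis add_eq_0_iff2 mult_2 mult_eq_0_iff add.inverse_inverse minus_equation_iff)
    moreover have "{y. y ^ 2 = D} = {w, -w}" using w by (auto simp: power2_eq_iff)
    ultimately show ?thesis using True False by (simp add: qchar_def)
  next
    case nosq: False
    hence "{y. y ^ 2 = D} = {}" by auto
    thus ?thesis using nosq False by (simp add: qchar_def)
  qed
qed

lemma sum_sq: assumes two: "(2::'a::{finite,field}) \<noteq> 0"
  shows "(\<Sum>y\<in>UNIV. f ((y::'a) ^ 2)) = (\<Sum>D\<in>UNIV. (1 + qchar D) * (f D :: complex))"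
proof -
  have "(\<Sum>y\<in>UNIV. f ((y::'a) ^ 2)) = (\<Sum>D\<in>UNIV. \<Sum>y\<in>{y. y ^ 2 = D}. f (y ^ 2))"
    using sum.group[of "UNIV::'a set" UNIV "\<lambda>y. y ^ 2" "\<lambda>y. f (y ^ 2)"] by simp
  also have "\<dots> = (\<Sum>D\<in>UNIV. of_nat (card {y::'a. y ^ 2 = D}) * f D)"
    by (rule sum.cong) auto
  finally show ?thesis using card_sqrt[OF two] by simp
qed


locale ffc =
  fixes \<psi> :: "'a::{finite,field} \<Rightarrow> complex"
  assumes nt: "nontriv_add_char \<psi>" and two: "(2::'a) \<noteq> 0"
begin

lemma psi_add: "\<psi> (x + y) = \<psi> x * \<psi> y" using nt unfolding nontriv_add_char_def by blast
lemma psi_nz: "\<psi> x \<noteq> 0" using nt unfolding nontriv_add_char_def by blast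
lemma psi_0[simp]: "\<psi> 0 = 1"
proof -
  have h: "\<psi> 0 = \<psi> 0 * \<psi> 0" using psi_add[of 0 0, unfolded add_0] .
  from h have "\<psi> 0 = 0 \<or> \<psi> 0 = 1" by (subst (asm) mult_cancel_left1)
  with psi_nz show ?thesis by blast
qed
lemma psi_neg: "\<psi> (- x) = inverse (\<psi> x)"
proof -
  have "\<psi> (- x) * \<psi> x = 1" using psi_add[of "-x" x] by simp
  thus ?thesis by (metis inverse_unique mult.commute)
qed
lemma psi_diff: "\<psi> (x - y) = \<psi> x * inverse (\<psi> y)"
  using psi_add[of x "-y"] psi_neg[of y] by simp

lemma psi_sum_all: "(\<Sum>x\<in>(UNIV::'a set). \<psi> (a * x)) = (if a = 0 then of_nat CARD('a) else 0)"
proof (cases "a = 0")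
  case True thus ?thesis by simp
next
  case False
  have "(\<Sum>x\<in>(UNIV::'a set). \<psi> (a * x)) = (\<Sum>x\<in>(UNIV::'a set). \<psi> x)"
    by (rule sum_bij_UNIV) (rule bijI2[where g = "\<lambda>x. x / a"], use False in auto)
  also have "\<dots> = 0"
  proof -
    obtain b where b: "\<psi> b \<noteq> 1" using nt unfolding nontriv_add_char_def by blast
    have "(\<Sum>x\<in>(UNIV::'a set). \<psi> x) = (\<Sum>x\<in>(UNIV::'a set). \<psi> (x + b))"
      by (rule sum_bij_UNIV[symmetric]) (rule bijI2[where g = "\<lambda>x. x - b"], auto)
    also have "\<dots> = \<psi> b * (\<Sum>x\<in>(UNIV::'a set). \<psi> x)"
      by (simp add: psi_add sum_distrib_left mult.commute)
    finally show ?thesis using b by (rule fixpoint_zero)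
  qed
  finally show ?thesis using False by simp
qed

lemma psi_sum_all': "(\<Sum>x\<in>(UNIV::'a set). \<psi> (x * a)) = (if a = 0 then of_nat CARD('a) else 0)"
  using psi_sum_all[of a] by (simp add: mult.commute)

lemma psi_sumI: "\<psi> (\<Sum>i\<in>I. f i) = (\<Prod>i\<in>I. \<psi> (f i))"
proof (cases "finite I")
  case True thus ?thesis by (induction I rule: finite_induct) (simp_all add: psi_add)
qed simp

definition Gs :: "('a \<Rightarrow> complex) \<Rightarrow> complex" where
  "Gs c = (\<Sum>x\<in>UNIV. \<psi> x * c x)"

lemma gauss_Gs: assumes "c \<in> mchars" shows "gauss \<psi> c = - Gs c"
proof -
  have "Gs c = \<psi> 0 * c 0 + (\<Sum>x\<in>UNIV - {0}. \<psi> x * c x)" unfolding Gs_def by (rule sum.remove) auto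
  thus ?thesis using assms by (simp add: gauss_def)
qed

lemma Gs_eps: "Gs eps = -1"
proof -
  have "Gs eps = (\<Sum>x\<in>(UNIV::'a set). \<psi> (1 * x)) - \<psi> 0"
  proof -
    have "(\<Sum>x\<in>(UNIV::'a set). \<psi> (1 * x)) = \<psi> 0 + (\<Sum>x\<in>UNIV - {0}. \<psi> x)"
      using sum.remove[of "UNIV::'a set" 0 \<psi>] by simp
    moreover have "Gs eps = (\<Sum>x\<in>UNIV - {0}. \<psi> x)"
      unfolding Gs_def by (rule sum.mono_neutral_cong_right) auto
    ultimately show ?thesis by simp
  qed
  thus ?thesis using psi_sum_all[of 1] by simp
qed

lemma gauss_eps[simp]: "gauss \<psi> eps = 1" using gauss_Gs[OF eps_mchars] Gs_eps by simp
lemma gauss0_eps: "gauss0 \<psi> eps = of_nat CARD('a)" by (simp add: gauss0_def)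
lemma gauss0_neps: "c \<noteq> eps \<Longrightarrow> gauss0 \<psi> c = gauss \<psi> c" by (simp add: gauss0_def)

lemma twist: assumes c: "c \<in> mchars" and z: "(z::'a) \<noteq> 0"
  shows "(\<Sum>t\<in>UNIV. c t * \<psi> (z * t)) = inverse (c z) * Gs c"
proof -
  have "(\<Sum>t\<in>UNIV. c t * \<psi> (z * t)) = (\<Sum>s\<in>UNIV. c (s / z) * \<psi> (z * (s / z)))"
    by (rule sum_bij_UNIV[symmetric]) (rule bijI2[where g = "\<lambda>x. x * z"], use z in auto)
  also have "\<dots> = (\<Sum>s\<in>UNIV. inverse (c z) * (\<psi> s * c s))"
    by (rule sum.cong) (simp_all add: z mchars_mult[OF c] mchars_inverse[OF c] divide_inverse mult_ac)
  finally show ?thesis by (simp add: Gs_def sum_distrib_left)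
qed

lemma twist_gen: assumes c: "c \<in> mchars" and ne: "c \<noteq> eps"
  shows "(\<Sum>t\<in>UNIV. c t * \<psi> (z * t)) = chinv c z * Gs c"
proof (cases "z = 0")
  case True
  thus ?thesis using char_sum[OF c] ne c by simp
qed (simp add: twist[OF c])

lemma GG: assumes c: "c \<in> mchars" and ne: "c \<noteq> eps"
  shows "Gs c * Gs (chinv c) = c (-1) * of_nat CARD('a)"
proof -
  have step: "\<psi> t * inverse (c t) * Gs c = (\<Sum>u\<in>UNIV. c u * \<psi> (t * (1 + u)))" for t
  proof (cases "t = 0")
    case True thus ?thesis using char_sum[OF c] ne c by simp
  next
    case False
    have "(\<Sum>u\<in>UNIV. c u * \<psi> (t * u)) = inverse (c t) * Gs c" by (rule twist[OF c False])
    hence "\<psi> t * inverse (c t) * Gs c = \<psi> t * (\<Sum>u\<in>UNIV. c u * \<psi> (t * u))" by simp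
    also have "\<dots> = (\<Sum>u\<in>UNIV. c u * \<psi> (t * (1 + u)))"
      by (simp add: sum_distrib_left distrib_left psi_add mult_ac)
    finally show ?thesis .
  qed
  have "Gs c * Gs (chinv c) = (\<Sum>t\<in>UNIV. \<psi> t * inverse (c t) * Gs c)"
    by (simp add: Gs_def sum_distrib_left sum_distrib_right mult_ac)
  also have "\<dots> = (\<Sum>t\<in>UNIV. \<Sum>u\<in>UNIV. c u * \<psi> (t * (1 + u)))" using step by simp
  also have "\<dots> = (\<Sum>u\<in>UNIV. c u * (\<Sum>t\<in>UNIV. \<psi> ((1 + u) * t)))"
    by (subst sum.swap) (simp add: sum_distrib_left mult_ac)
  also have "\<dots> = (\<Sum>u\<in>UNIV. if u = -1 then c u * of_nat CARD('a) else 0)"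
    by (rule sum.cong) (auto simp: psi_sum_all add_eq_0_iff)
  also have "\<dots> = c (-1) * of_nat CARD('a)" by simp
  finally show ?thesis .
qed

lemma Gs_nz: assumes c: "c \<in> mchars" shows "Gs c \<noteq> 0"
proof (cases "c = eps")
  case True thus ?thesis by (simp add: Gs_eps)
next
  case False
  have "c (-1) \<noteq> 0" using mchars_nz[OF c, of "-1"] by simp
  hence "Gs c * Gs (chinv c) \<noteq> 0" using GG[OF c False] by simp
  thus ?thesis by auto
qed

lemma gauss_nz: "c \<in> mchars \<Longrightarrow> gauss \<psi> c \<noteq> 0" using Gs_nz gauss_Gs by simp

lemma gauss0_nz: "c \<in> mchars \<Longrightarrow> gauss0 \<psi> c \<noteq> 0" using gauss_nz by (simp add: gauss0_def)

lemma gauss0_inv: assumes c: "c \<in> mchars"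
  shows "gauss0 \<psi> c * (c (-1) * gauss \<psi> (chinv c)) = of_nat CARD('a)"
proof (cases "c = eps")
  case True thus ?thesis by (simp add: gauss0_def)
next
  case False
  have "gauss0 \<psi> c * (c (-1) * gauss \<psi> (chinv c)) = c (-1) * (Gs c * Gs (chinv c))"
    using False c by (simp add: gauss0_def gauss_Gs)
  also have "\<dots> = (c (-1) * c (-1)) * of_nat CARD('a)" using GG[OF c False] by simp
  finally show ?thesis using mchars_m1[OF c] by simp
qed

lemma quadG: assumes t: "(t::'a) \<noteq> 0"
  shows "(\<Sum>y\<in>UNIV. \<psi> (t * y ^ 2)) = qchar t * Gs qchar"
proof -
  have "(\<Sum>y\<in>UNIV. \<psi> (t * y ^ 2)) = (\<Sum>D\<in>UNIV. (1 + qchar D) * \<psi> (t * D))"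
    by (rule sum_sq[OF two])
  also have "\<dots> = (\<Sum>D\<in>UNIV. \<psi> (t * D)) + (\<Sum>D\<in>UNIV. qchar D * \<psi> (t * D))"
    by (simp add: distrib_right sum.distrib)
  also have "(\<Sum>D\<in>UNIV. \<psi> (t * D)) = 0" using psi_sum_all[of t] t by simp
  also have "(\<Sum>D\<in>UNIV. qchar D * \<psi> (t * D)) = inverse (qchar t) * Gs qchar"
    by (rule twist[OF qchar_mchars[OF two] t])
  finally show ?thesis by (simp add: qchar_inverse)
qed

definition J :: "('a \<Rightarrow> complex) \<Rightarrow> ('a \<Rightarrow> complex) \<Rightarrow> complex" where
  "J a b = (\<Sum>x\<in>UNIV. a x * b (1 - x))"

lemma GJ: assumes a: "a \<in> mchars" and b: "b \<in> mchars" and ne: "chmul a b \<noteq> eps"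
  shows "Gs a * Gs b = Gs (chmul a b) * J a b"
proof -
  have inner: "(\<Sum>s\<in>UNIV. a s * b (r - s)) = chmul a b r * J a b" for r :: 'a
  proof (cases "r = 0")
    case True
    have "(\<Sum>s\<in>UNIV. a s * b (r - s)) = (\<Sum>s\<in>UNIV. b (-1) * chmul a b s)"
    proof (rule sum.cong)
      fix s :: 'a
      have "r - s = (-1) * s" using True by simp
      hence "b (r - s) = b (-1) * b s" by (simp only: mchars_mult[OF b])
      thus "a s * b (r - s) = b (-1) * chmul a b s" by simp
    qed simp
    also have "\<dots> = b (-1) * (\<Sum>s\<in>UNIV. chmul a b s)" by (simp only: sum_distrib_left)
    also have "(\<Sum>s\<in>UNIV. chmul a b s) = 0" using char_sum[OF chmul_mchars[OF a b]] ne by simp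
    finally show ?thesis using True a b by simp
  next
    case False
    have "(\<Sum>s\<in>UNIV. a s * b (r - s)) = (\<Sum>x\<in>UNIV. a (r * x) * b (r - r * x))"
      by (rule sum_bij_UNIV[symmetric]) (rule bijI2[where g = "\<lambda>x. x / r"], use False in auto)
    also have "\<dots> = (\<Sum>x\<in>UNIV. (a r * b r) * (a x * b (1 - x)))"
    proof (rule sum.cong)
      fix x :: 'a
      have "r - r * x = r * (1 - x)" by (simp add: algebra_simps)
      hence "b (r - r * x) = b r * b (1 - x)" by (simp only: mchars_mult[OF b])
      moreover have "a (r * x) = a r * a x" by (rule mchars_mult[OF a])
      ultimately show "a (r * x) * b (r - r * x) = (a r * b r) * (a x * b (1 - x))"
        by (simp only: mult_ac)
    qed simp
    also have "\<dots> = (a r * b r) * J a b" unfolding J_def by (simp only: sum_distrib_left)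
    finally show ?thesis by simp
  qed
  have "Gs a * Gs b = (\<Sum>s\<in>UNIV. \<Sum>t\<in>UNIV. \<psi> s * a s * (\<psi> t * b t))"
    unfolding Gs_def by (rule sum_product)
  also have "\<dots> = (\<Sum>s\<in>UNIV. \<Sum>r\<in>UNIV. \<psi> s * a s * (\<psi> (r - s) * b (r - s)))"
  proof (rule sum.cong)
    fix s :: 'a
    show "(\<Sum>t\<in>UNIV. \<psi> s * a s * (\<psi> t * b t)) = (\<Sum>r\<in>UNIV. \<psi> s * a s * (\<psi> (r - s) * b (r - s)))"
      by (rule sum_bij_UNIV[symmetric]) (rule bijI2[where g = "\<lambda>x. x + s"], auto)
  qed simp
  also have "\<dots> = (\<Sum>s\<in>UNIV. \<Sum>r\<in>UNIV. \<psi> r * (a s * b (r - s)))"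
  proof -
    have eq: "\<psi> s * a s * (\<psi> (r - s) * b (r - s)) = \<psi> r * (a s * b (r - s))" for s r
    proof -
      have "\<psi> s * \<psi> (r - s) = \<psi> r" using psi_add[of s "r - s"] by simp
      thus ?thesis by (metis mult.assoc mult.left_commute)
    qed
    show ?thesis by (simp only: eq)
  qed
  also have "\<dots> = (\<Sum>r\<in>UNIV. \<Sum>s\<in>UNIV. \<psi> r * (a s * b (r - s)))" by (rule sum.swap)
  also have "\<dots> = (\<Sum>r\<in>UNIV. \<psi> r * (chmul a b r * J a b))"
    by (simp only: sum_distrib_left[symmetric] inner)
  also have "\<dots> = (\<Sum>r\<in>UNIV. \<psi> r * chmul a b r) * J a b"
    by (simp only: sum_distrib_right mult.assoc)
  finally show ?thesis by (simp only: Gs_def)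
qed

lemma four_nz: "(4::'a) \<noteq> 0"
proof -
  have h: "(4::'a) = 2 * 2" by simp
  show ?thesis unfolding h by (rule no_zero_divisors[OF two two])
qed

end


context ffc
begin

lemma half_bij: "bij (\<lambda>y::'a. (1 + y) / 2)"
proof (rule bijI2[where g = "\<lambda>x. 2 * x - 1"])
  fix y :: 'a show "2 * ((1 + y) / 2) - 1 = y" using two by (simp add: field_simps)
next
  fix x :: 'a show "(1 + (2 * x - 1)) / 2 = x" using two by simp
qed

lemma half_prod: "((1::'a) + y) / 2 * (1 - (1 + y) / 2) = (1 - y ^ 2) / 4"
proof -
  have "(4::'a) = 2 * 2" by simp
  thus ?thesis using two by (simp add: field_simps power2_eq_square)
qed

lemma JJ: assumes c: "c \<in> mchars" and ne: "c \<noteq> eps"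
  shows "J c c = inverse (c 4) * J c qchar"
proof -
  have "J c c = (\<Sum>y\<in>UNIV. c ((1 + y) / 2) * c (1 - (1 + y) / 2))"
    unfolding J_def by (rule sum_bij_UNIV[symmetric, OF half_bij])
  also have "\<dots> = (\<Sum>y\<in>UNIV. inverse (c 4) * c (1 - y ^ 2))"
  proof (rule sum.cong)
    fix y :: 'a
    have "c ((1 + y) / 2) * c (1 - (1 + y) / 2) = c ((1 + y) / 2 * (1 - (1 + y) / 2))"
      by (rule mchars_mult[OF c, symmetric])
    also have "\<dots> = c ((1 - y ^ 2) / 4)" by (simp only: half_prod)
    also have "\<dots> = c (1 - y ^ 2) * inverse (c 4)"
      by (simp only: divide_inverse mchars_mult[OF c] mchars_inverse[OF c])
    finally show "c ((1 + y) / 2) * c (1 - (1 + y) / 2) = inverse (c 4) * c (1 - y ^ 2)"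
      by (simp only: mult.commute)
  qed simp
  also have "\<dots> = inverse (c 4) * (\<Sum>y\<in>UNIV. c (1 - y ^ 2))" by (simp only: sum_distrib_left)
  also have "(\<Sum>y\<in>UNIV. c (1 - y ^ 2)) = (\<Sum>D\<in>UNIV. (1 + qchar D) * c (1 - D))"
    by (rule sum_sq[OF two])
  also have "\<dots> = (\<Sum>D\<in>UNIV. c (1 - D)) + (\<Sum>D\<in>UNIV. qchar D * c (1 - D))"
    by (simp only: distrib_right sum.distrib mult_1)
  also have "(\<Sum>D\<in>UNIV. c (1 - D)) = (\<Sum>x\<in>UNIV. c x)"
    by (rule sum_bij_UNIV) (rule bijI2[where g = "\<lambda>x. 1 - x"], auto)
  also have "\<dots> = 0" using char_sum[OF c] ne by simp
  also have "(\<Sum>D\<in>UNIV. qchar D * c (1 - D)) = (\<Sum>x\<in>UNIV. qchar (1 - x) * c (1 - (1 - x)))"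
    by (rule sum_bij_UNIV[symmetric]) (rule bijI2[where g = "\<lambda>x. 1 - x"], auto)
  also have "\<dots> = J c qchar" unfolding J_def by (rule sum.cong) (simp_all add: mult.commute)
  finally show ?thesis by simp
qed

lemma dupG: assumes c: "c \<in> mchars"
  shows "gauss \<psi> c * gauss \<psi> (chmul c qchar) = inverse (c 4) * gauss \<psi> (chmul c c) * gauss \<psi> qchar"
proof -
  have q: "(qchar :: 'a \<Rightarrow> complex) \<in> mchars" by (rule qchar_mchars[OF two])
  have q4: "qchar (4::'a) = 1" by (rule qchar_4[OF two])
  show ?thesis
  proof (cases "c = eps")
    case True thus ?thesis using four_nz q by simp
  next
    case ne1: False
    show ?thesis
    proof (cases "c = qchar")
      case True thus ?thesis using q4 q by (simp add: qchar_chmul mult.commute)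
    next
      case ne2: False
      have ne3: "chmul c c \<noteq> eps" using sq_eps[OF two c] ne1 ne2 by blast
      have ne4: "chmul c qchar \<noteq> eps"
      proof
        assume h: "chmul c qchar = eps"
        have "c = chmul (chmul c qchar) qchar" using c by (simp add: chmul_assoc qchar_chmul)
        also have "\<dots> = qchar" using h q by simp
        finally show False using ne2 by simp
      qed
      have c4: "c 4 \<noteq> 0" using mchars_nz[OF c four_nz] .
      have e1: "Gs c * Gs c = Gs (chmul c c) * J c c" by (rule GJ[OF c c ne3])
      have e2: "Gs c * Gs qchar = Gs (chmul c qchar) * J c qchar" by (rule GJ[OF c q ne4])
      have "Gs c * (Gs c * Gs (chmul c qchar)) = Gs c * (inverse (c 4) * Gs (chmul c c) * Gs qchar)"
      proof -
        have "Gs c * (Gs c * Gs (chmul c qchar)) = Gs (chmul c qchar) * (Gs (chmul c c) * J c c)"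
          using e1 by (simp add: mult_ac)
        also have "\<dots> = inverse (c 4) * Gs (chmul c c) * (Gs (chmul c qchar) * J c qchar)"
          using JJ[OF c ne1] by (simp add: mult_ac)
        also have "\<dots> = Gs c * (inverse (c 4) * Gs (chmul c c) * Gs qchar)"
          using e2 by (simp add: mult_ac)
        finally show ?thesis .
      qed
      hence "Gs c * Gs (chmul c qchar) = inverse (c 4) * Gs (chmul c c) * Gs qchar"
        using Gs_nz[OF c] by simp
      thus ?thesis using c q by (simp add: gauss_Gs)
    qed
  qed
qed

lemma dup0: assumes b: "b \<in> mchars" and ne: "b \<noteq> eps"
  shows "gauss0 \<psi> (chmul b qchar) * gauss \<psi> b = inverse (b 4) * gauss0 \<psi> (chmul b b) * gauss \<psi> qchar"
proof (cases "b = qchar")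
  case True thus ?thesis using qchar_4[OF two] by (simp add: qchar_chmul gauss0_def mult.commute)
next
  case False
  have ne3: "chmul b b \<noteq> eps" using sq_eps[OF two b] ne False by blast
  have ne4: "chmul b qchar \<noteq> eps"
  proof
    assume h: "chmul b qchar = eps"
    have "b = chmul (chmul b qchar) qchar" using b by (simp add: chmul_assoc qchar_chmul)
    also have "\<dots> = qchar" using h qchar_mchars[OF two] by simp
    finally show False using False by simp
  qed
  show ?thesis using dupG[OF b] ne3 ne4 by (simp add: gauss0_def mult.commute)
qed


lemma sum_swap3: "(\<Sum>a\<in>A. \<Sum>b\<in>B. \<Sum>c\<in>C. f a b c) = (\<Sum>b\<in>B. \<Sum>c\<in>C. \<Sum>a\<in>A. f a b c)"
proof -
  have "(\<Sum>a\<in>A. \<Sum>b\<in>B. \<Sum>c\<in>C. f a b c) = (\<Sum>b\<in>B. \<Sum>a\<in>A. \<Sum>c\<in>C. f a b c)" by (rule sum.swap)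
  also have "\<dots> = (\<Sum>b\<in>B. \<Sum>c\<in>C. \<Sum>a\<in>A. f a b c)" by (rule sum.cong[OF refl]) (rule sum.swap)
  finally show ?thesis .
qed

lemma sum_swap4: "(\<Sum>a\<in>A. \<Sum>b\<in>B. \<Sum>c\<in>C. \<Sum>d\<in>D. f a b c d) = (\<Sum>b\<in>B. \<Sum>c\<in>C. \<Sum>d\<in>D. \<Sum>a\<in>A. f a b c d)"
proof -
  have "(\<Sum>a\<in>A. \<Sum>b\<in>B. \<Sum>c\<in>C. \<Sum>d\<in>D. f a b c d) = (\<Sum>b\<in>B. \<Sum>a\<in>A. \<Sum>c\<in>C. \<Sum>d\<in>D. f a b c d)" by (rule sum.swap)
  also have "\<dots> = (\<Sum>b\<in>B. \<Sum>c\<in>C. \<Sum>d\<in>D. \<Sum>a\<in>A. f a b c d)" by (rule sum.cong[OF refl]) (rule sum_swap3)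
  finally show ?thesis .
qed

lemma q_nz: "(of_nat CARD('a) :: complex) \<noteq> 0" by simp

lemma gauss0_inv': assumes c: "c \<in> mchars"
  shows "1 / gauss0 \<psi> c = c (-1) * gauss \<psi> (chinv c) / of_nat CARD('a)"
  using gauss0_inv[OF c] gauss0_nz[OF c] q_nz by (simp add: field_simps)

lemma poch0_inv: assumes e: "e \<in> mchars" and v: "v \<in> mchars"
  shows "1 / poch0 \<psi> e v = gauss0 \<psi> e * (chmul e v (-1) * gauss \<psi> (chinv (chmul e v)) / of_nat CARD('a))"
proof -
  have "1 / poch0 \<psi> e v = gauss0 \<psi> e * (1 / gauss0 \<psi> (chmul e v))"
    unfolding poch0_def by simp
  also have "1 / gauss0 \<psi> (chmul e v) = chmul e v (-1) * gauss \<psi> (chinv (chmul e v)) / of_nat CARD('a)"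
    by (rule gauss0_inv'[OF chmul_mchars[OF e v]])
  finally show ?thesis .
qed

lemma poch0_eps_inv: assumes v: "v \<in> mchars"
  shows "1 / poch0 \<psi> eps v = v (-1) * gauss \<psi> (chinv v)"
  using poch0_inv[OF eps_mchars v] v q_nz by (simp add: gauss0_eps)

lemma m1_sq: "c \<in> mchars \<Longrightarrow> c (-1) * c (-1) = 1" by (rule mchars_m1)

lemma lhs_term: assumes b: "b \<in> mchars" and v: "v \<in> mchars"
  shows "v y / (poch0 \<psi> (chmul b qchar) v * poch0 \<psi> eps v)
       = (gauss0 \<psi> (chmul b qchar) * (b (-1) * (qchar::'a \<Rightarrow> complex) (-1)) / of_nat CARD('a)) *
         (Gs (chinv (chmul (chmul b qchar) v)) * Gs (chinv v) * v y)"
proof -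
  have q: "(qchar :: 'a \<Rightarrow> complex) \<in> mchars" by (rule qchar_mchars[OF two])
  have bq: "chmul b qchar \<in> mchars" using b q by simp
  have "v y / (poch0 \<psi> (chmul b qchar) v * poch0 \<psi> eps v) = v y * (1 / poch0 \<psi> (chmul b qchar) v) * (1 / poch0 \<psi> eps v)"
    by simp
  also have "\<dots> = v y * (gauss0 \<psi> (chmul b qchar) * (chmul (chmul b qchar) v (-1) * gauss \<psi> (chinv (chmul (chmul b qchar) v)) / of_nat CARD('a)))
      * (v (-1) * gauss \<psi> (chinv v))"
    by (simp only: poch0_inv[OF bq v] poch0_eps_inv[OF v])
  also have "\<dots> = (gauss0 \<psi> (chmul b qchar) * (b (-1) * (qchar::'a \<Rightarrow> complex) (-1)) / of_nat CARD('a)) * (v (-1) * v (-1)) *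
         (Gs (chinv (chmul (chmul b qchar) v)) * Gs (chinv v) * v y)"
    using b q v by (simp add: gauss_Gs mult_ac)
  also have "v (-1) * v (-1) = 1" by (rule m1_sq[OF v])
  finally show ?thesis by (simp only: mult_1_right)
qed

lemma rhs_term: assumes b: "b \<in> mchars" and v: "v \<in> mchars"
  shows "poch \<psi> b v / (poch0 \<psi> (chmul b b) v * poch0 \<psi> eps v) * v w
       = - (gauss0 \<psi> (chmul b b) / (of_nat CARD('a) * gauss \<psi> b)) *
         (Gs (chmul b v) * Gs (chinv (chmul (chmul b b) v)) * Gs (chinv v) * v w)"
proof -
  have bb: "chmul b b \<in> mchars" using b by simp
  have gb: "gauss \<psi> b \<noteq> 0" by (rule gauss_nz[OF b])
  have "poch \<psi> b v / (poch0 \<psi> (chmul b b) v * poch0 \<psi> eps v) * v w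
      = gauss \<psi> (chmul b v) / gauss \<psi> b * (1 / poch0 \<psi> (chmul b b) v) * (1 / poch0 \<psi> eps v) * v w"
    by (simp add: poch_def)
  also have "\<dots> = gauss \<psi> (chmul b v) / gauss \<psi> b * (gauss0 \<psi> (chmul b b) * (chmul (chmul b b) v (-1) * gauss \<psi> (chinv (chmul (chmul b b) v)) / of_nat CARD('a)))
      * (v (-1) * gauss \<psi> (chinv v)) * v w"
    by (simp only: poch0_inv[OF bb v] poch0_eps_inv[OF v])
  also have "\<dots> = - (gauss0 \<psi> (chmul b b) / (of_nat CARD('a) * gauss \<psi> b)) * ((b (-1) * b (-1)) * (v (-1) * v (-1))) *
         (Gs (chmul b v) * Gs (chinv (chmul (chmul b b) v)) * Gs (chinv v) * v w)"
    using b v bb gb by (simp add: gauss_Gs field_simps)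
  also have "(b (-1) * b (-1)) * (v (-1) * v (-1)) = 1" using m1_sq[OF b] m1_sq[OF v] by simp
  finally show ?thesis by (simp only: mult_1_right)
qed
end


context ffc
begin


lemma collapse2: assumes A: "A \<in> mchars" and y: "(y::'a) \<noteq> 0"
  shows "(\<Sum>v\<in>mchars. Gs (chinv (chmul A v)) * Gs (chinv v) * v y)
       = (of_nat (CARD('a) - 1)::complex) * (\<Sum>u\<in>UNIV. inverse (A u) * \<psi> (u + y / u))"
proof -
  have "(\<Sum>v\<in>mchars. Gs (chinv (chmul A v)) * Gs (chinv v) * v y)
      = (\<Sum>v\<in>mchars. \<Sum>u\<in>UNIV. \<Sum>t\<in>UNIV. (\<psi> u * inverse (A u) * \<psi> t) * (v y * inverse (v (u * t))))"
  proof (rule sum.cong[OF refl])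
    fix v :: "'a \<Rightarrow> complex" assume v: "v \<in> mchars"
    have "Gs (chinv (chmul A v)) * Gs (chinv v) * v y
        = (\<Sum>u\<in>UNIV. \<Sum>t\<in>UNIV. (\<psi> u * chinv (chmul A v) u) * (\<psi> t * chinv v t)) * v y"
      unfolding Gs_def by (simp only: sum_product)
    also have "\<dots> = (\<Sum>u\<in>UNIV. \<Sum>t\<in>UNIV. (\<psi> u * chinv (chmul A v) u) * (\<psi> t * chinv v t) * v y)"
      by (simp only: sum_distrib_right)
    also have "\<dots> = (\<Sum>u\<in>UNIV. \<Sum>t\<in>UNIV. (\<psi> u * inverse (A u) * \<psi> t) * (v y * inverse (v (u * t))))"
      by (intro sum.cong refl) (simp add: mchars_mult[OF v] mult_ac)
    finally show "Gs (chinv (chmul A v)) * Gs (chinv v) * v y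
        = (\<Sum>u\<in>UNIV. \<Sum>t\<in>UNIV. (\<psi> u * inverse (A u) * \<psi> t) * (v y * inverse (v (u * t))))" .
  qed
  also have "\<dots> = (\<Sum>u\<in>UNIV. \<Sum>t\<in>UNIV. \<Sum>v\<in>mchars. (\<psi> u * inverse (A u) * \<psi> t) * (v y * inverse (v (u * t))))"
    by (rule sum_swap3)
  also have "\<dots> = (\<Sum>u\<in>UNIV. \<Sum>t\<in>UNIV. (\<psi> u * inverse (A u) * \<psi> t) * (if u * t \<noteq> 0 \<and> y = u * t then (of_nat (CARD('a) - 1)::complex) else 0))"
    by (simp only: sum_distrib_left[symmetric] orth2)
  also have "\<dots> = (\<Sum>u\<in>UNIV. (of_nat (CARD('a) - 1)::complex) * (inverse (A u) * \<psi> (u + y / u)))"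
  proof (rule sum.cong[OF refl])
    fix u :: 'a
    show "(\<Sum>t\<in>UNIV. (\<psi> u * inverse (A u) * \<psi> t) * (if u * t \<noteq> 0 \<and> y = u * t then (of_nat (CARD('a) - 1)::complex) else 0))
        = (of_nat (CARD('a) - 1)::complex) * (inverse (A u) * \<psi> (u + y / u))"
    proof (cases "u = 0")
      case True thus ?thesis using A by simp
    next
      case False
      have cond: "(u * t \<noteq> 0 \<and> y = u * t) = (t = y / u)" for t
        using False y by (auto simp: field_simps)
      have "(\<Sum>t\<in>UNIV. (\<psi> u * inverse (A u) * \<psi> t) * (if u * t \<noteq> 0 \<and> y = u * t then (of_nat (CARD('a) - 1)::complex) else 0))
          = (\<Sum>t\<in>UNIV. if t = y / u then (\<psi> u * inverse (A u) * \<psi> t) * (of_nat (CARD('a) - 1)::complex) else 0)"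
        by (rule sum.cong[OF refl], subst cond, simp)
      also have "\<dots> = (\<psi> u * inverse (A u) * \<psi> (y / u)) * (of_nat (CARD('a) - 1)::complex)" by simp
      also have "\<dots> = (of_nat (CARD('a) - 1)::complex) * (inverse (A u) * \<psi> (u + y / u))" by (simp add: psi_add mult_ac)
      finally show ?thesis .
    qed
  qed
  also have "\<dots> = (of_nat (CARD('a) - 1)::complex) * (\<Sum>u\<in>UNIV. inverse (A u) * \<psi> (u + y / u))" by (simp only: sum_distrib_left)
  finally show ?thesis .
qed


lemma triple_prod: "(\<Sum>a\<in>A. f a) * (\<Sum>c\<in>C. g c) * (\<Sum>t\<in>T. h t)
   = (\<Sum>a\<in>A. \<Sum>c\<in>C. \<Sum>t\<in>T. f a * g c * (h t :: complex))"
proof -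
  have "(\<Sum>a\<in>A. f a) * (\<Sum>c\<in>C. g c) * (\<Sum>t\<in>T. h t) = (\<Sum>a\<in>A. \<Sum>c\<in>C. f a * g c) * (\<Sum>t\<in>T. h t)"
    by (simp only: sum_product)
  also have "\<dots> = (\<Sum>a\<in>A. (\<Sum>c\<in>C. f a * g c) * (\<Sum>t\<in>T. h t))" by (rule sum_distrib_right)
  also have "\<dots> = (\<Sum>a\<in>A. \<Sum>c\<in>C. f a * g c * (\<Sum>t\<in>T. h t))" by (rule sum.cong[OF refl]) (rule sum_distrib_right)
  also have "\<dots> = (\<Sum>a\<in>A. \<Sum>c\<in>C. \<Sum>t\<in>T. f a * g c * h t)" by (intro sum.cong refl) (rule sum_distrib_left)
  finally show ?thesis .
qed

lemma collapse3: assumes b: "b \<in> mchars" and ne: "b \<noteq> eps" and w: "(w::'a) \<noteq> 0"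
  shows "(\<Sum>v\<in>mchars. Gs (chmul b v) * Gs (chinv (chmul (chmul b b) v)) * Gs (chinv v) * v w)
       = (of_nat (CARD('a) - 1)::complex) * Gs b * (\<Sum>c\<in>UNIV. \<psi> c * inverse (b (c * (c + w))))"
proof -
  define f where "f a c t = \<psi> a * b a * (\<psi> c * (inverse (b c) * inverse (b c))) * \<psi> t" for a c t :: 'a
  have "(\<Sum>v\<in>mchars. Gs (chmul b v) * Gs (chinv (chmul (chmul b b) v)) * Gs (chinv v) * v w)
      = (\<Sum>v\<in>mchars. \<Sum>a\<in>UNIV. \<Sum>c\<in>UNIV. \<Sum>t\<in>UNIV. f a c t * (v (a * w) * inverse (v (c * t))))"
  proof (rule sum.cong[OF refl])
    fix v :: "'a \<Rightarrow> complex" assume v: "v \<in> mchars"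
    have "Gs (chmul b v) * Gs (chinv (chmul (chmul b b) v)) * Gs (chinv v) * v w
       = (\<Sum>a\<in>UNIV. \<Sum>c\<in>UNIV. \<Sum>t\<in>UNIV. (\<psi> a * chmul b v a) * (\<psi> c * chinv (chmul (chmul b b) v) c) * (\<psi> t * chinv v t)) * v w"
      unfolding Gs_def by (simp only: triple_prod)
    also have "\<dots> = (\<Sum>a\<in>UNIV. \<Sum>c\<in>UNIV. \<Sum>t\<in>UNIV. (\<psi> a * chmul b v a) * (\<psi> c * chinv (chmul (chmul b b) v) c) * (\<psi> t * chinv v t) * v w)"
      by (simp only: sum_distrib_right)
    also have "\<dots> = (\<Sum>a\<in>UNIV. \<Sum>c\<in>UNIV. \<Sum>t\<in>UNIV. f a c t * (v (a * w) * inverse (v (c * t))))"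
      by (intro sum.cong refl) (simp add: f_def mchars_mult[OF v] mult_ac)
    finally show "Gs (chmul b v) * Gs (chinv (chmul (chmul b b) v)) * Gs (chinv v) * v w
       = (\<Sum>a\<in>UNIV. \<Sum>c\<in>UNIV. \<Sum>t\<in>UNIV. f a c t * (v (a * w) * inverse (v (c * t))))" .
  qed
  also have "\<dots> = (\<Sum>a\<in>UNIV. \<Sum>c\<in>UNIV. \<Sum>t\<in>UNIV. \<Sum>v\<in>mchars. f a c t * (v (a * w) * inverse (v (c * t))))"
    by (rule sum_swap4)
  also have "\<dots> = (\<Sum>a\<in>UNIV. \<Sum>c\<in>UNIV. \<Sum>t\<in>UNIV. f a c t * (if c * t \<noteq> 0 \<and> a * w = c * t then (of_nat (CARD('a) - 1)::complex) else 0))"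
    by (simp only: sum_distrib_left[symmetric] orth2)
  also have "\<dots> = (\<Sum>a\<in>UNIV. \<Sum>c\<in>UNIV. (of_nat (CARD('a) - 1)::complex) * (\<psi> c * (inverse (b c) * inverse (b c)) * (b a * \<psi> ((1 + w / c) * a))))"
  proof (intro sum.cong refl)
    fix a c :: 'a
    show "(\<Sum>t\<in>UNIV. f a c t * (if c * t \<noteq> 0 \<and> a * w = c * t then (of_nat (CARD('a) - 1)::complex) else 0))
        = (of_nat (CARD('a) - 1)::complex) * (\<psi> c * (inverse (b c) * inverse (b c)) * (b a * \<psi> ((1 + w / c) * a)))"
    proof (cases "c = 0 \<or> a = 0")
      case True
      have "(\<Sum>t\<in>UNIV. f a c t * (if c * t \<noteq> 0 \<and> a * w = c * t then (of_nat (CARD('a) - 1)::complex) else 0)) = 0"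
        by (rule sum.neutral) (use True in auto)
      thus ?thesis using True b by auto
    next
      case False
      hence ca: "c \<noteq> 0" "a \<noteq> 0" by auto
      have cond: "(c * t \<noteq> 0 \<and> a * w = c * t) = (t = a * w / c)" for t
        using ca w by (auto simp: field_simps)
      have "(\<Sum>t\<in>UNIV. f a c t * (if c * t \<noteq> 0 \<and> a * w = c * t then (of_nat (CARD('a) - 1)::complex) else 0))
          = (\<Sum>t\<in>UNIV. if t = a * w / c then f a c t * (of_nat (CARD('a) - 1)::complex) else 0)"
        by (rule sum.cong[OF refl], subst cond, simp)
      also have "\<dots> = f a c (a * w / c) * (of_nat (CARD('a) - 1)::complex)" by simp
      also have "\<dots> = (of_nat (CARD('a) - 1)::complex) * (\<psi> c * (inverse (b c) * inverse (b c)) * (b a * (\<psi> a * \<psi> (a * w / c))))"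
        unfolding f_def by (simp only: mult_ac)
      also have "\<psi> a * \<psi> (a * w / c) = \<psi> ((1 + w / c) * a)"
        by (subst psi_add[symmetric]) (rule arg_cong[where f = \<psi>], simp add: algebra_simps)
      finally show ?thesis .
    qed
  qed
  also have "\<dots> = (of_nat (CARD('a) - 1)::complex) * (\<Sum>c\<in>UNIV. \<psi> c * (inverse (b c) * inverse (b c)) * (\<Sum>a\<in>UNIV. b a * \<psi> ((1 + w / c) * a)))"
    by (subst sum.swap) (simp only: sum_distrib_left)
  also have "\<dots> = (of_nat (CARD('a) - 1)::complex) * (\<Sum>c\<in>UNIV. \<psi> c * (inverse (b c) * inverse (b c)) * (chinv b (1 + w / c) * Gs b))"
    by (simp only: twist_gen[OF b ne])
  also have "\<dots> = (of_nat (CARD('a) - 1)::complex) * Gs b * (\<Sum>c\<in>UNIV. \<psi> c * inverse (b (c * (c + w))))"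
  proof -
    have "\<psi> c * (inverse (b c) * inverse (b c)) * (chinv b (1 + w / c) * Gs b) = Gs b * (\<psi> c * inverse (b (c * (c + w))))" for c
    proof (cases "c = 0")
      case True thus ?thesis using b by simp
    next
      case False
      have "c * (c + w) = c * (c * (1 + w / c))" using False by (simp add: field_simps)
      hence "b (c * (c + w)) = b c * (b c * b (1 + w / c))" by (simp only: mchars_mult[OF b])
      thus ?thesis by (simp add: mult_ac)
    qed
    thus ?thesis by (simp only: sum_distrib_left mult.assoc)
  qed
  finally show ?thesis .
qed

lemma eight_nz: "(8::'a) \<noteq> 0"
proof -
  have h: "(8::'a) = 2 * 4" by simp
  show ?thesis unfolding h by (rule no_zero_divisors[OF two four_nz])
qed

lemma complete_sq: assumes t: "(t::'a) \<noteq> 0"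
  shows "(\<Sum>z\<in>UNIV. \<psi> (t * z ^ 2 + z)) = \<psi> (- (1 / (4 * t))) * (qchar t * Gs qchar)"
proof -
  have "(\<Sum>z\<in>UNIV. \<psi> (t * z ^ 2 + z)) = (\<Sum>w\<in>UNIV. \<psi> (t * (w - 1 / (2 * t)) ^ 2 + (w - 1 / (2 * t))))"
    by (rule sum_bij_UNIV[symmetric]) (rule bijI2[where g = "\<lambda>x. x + 1 / (2 * t)"], auto)
  also have "\<dots> = (\<Sum>w\<in>UNIV. \<psi> (- (1 / (4 * t))) * \<psi> (t * w ^ 2))"
  proof (rule sum.cong[OF refl])
    fix w :: 'a
    have "t * (w - 1 / (2 * t)) ^ 2 + (w - 1 / (2 * t)) = - (1 / (4 * t)) + t * w ^ 2"
      using t two four_nz eight_nz by (simp add: field_simps power2_eq_square)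
    thus "\<psi> (t * (w - 1 / (2 * t)) ^ 2 + (w - 1 / (2 * t))) = \<psi> (- (1 / (4 * t))) * \<psi> (t * w ^ 2)"
      by (simp only: psi_add)
  qed
  also have "\<dots> = \<psi> (- (1 / (4 * t))) * (\<Sum>w\<in>UNIV. \<psi> (t * w ^ 2))" by (simp only: sum_distrib_left)
  also have "(\<Sum>w\<in>UNIV. \<psi> (t * w ^ 2)) = qchar t * Gs qchar" by (rule quadG[OF t])
  finally show ?thesis .
qed

lemma T4: "4 * (- 1 / (4 * u)) = - 1 / (u::'a)"
  by (cases "u = 0") (simp_all add: four_nz)

lemma T_inv: "- 1 / (4 * (- 1 / (4 * u))) = (u::'a)"
  by (simp only: T4) simp

lemma HK: assumes b: "b \<in> mchars" and ne: "b \<noteq> eps"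
  shows "(\<Sum>z\<in>UNIV. \<psi> z * inverse (b (z ^ 2 - x ^ 2)))
       = (Gs qchar / Gs b) * (b (-1) * (qchar::'a \<Rightarrow> complex) (-1) * inverse (b 4)) *
         (\<Sum>u\<in>UNIV. inverse (b u) * qchar u * \<psi> (u + (x ^ 2 / 4) / u))"
proof -
  have gb: "Gs b \<noteq> 0" by (rule Gs_nz[OF b])
  have q: "(qchar :: 'a \<Rightarrow> complex) \<in> mchars" by (rule qchar_mchars[OF two])
  have inv: "inverse (b y) = (\<Sum>t\<in>UNIV. b t * \<psi> (y * t)) / Gs b" for y
  proof -
    have "(\<Sum>t\<in>UNIV. b t * \<psi> (y * t)) = chinv b y * Gs b" by (rule twist_gen[OF b ne])
    hence e: "(\<Sum>t\<in>UNIV. b t * \<psi> (y * t)) = inverse (b y) * Gs b" by (simp only: chinv_apply)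
    show ?thesis unfolding e using gb by simp
  qed
  have "(\<Sum>z\<in>UNIV. \<psi> z * inverse (b (z ^ 2 - x ^ 2)))
      = (\<Sum>z\<in>UNIV. \<Sum>t\<in>UNIV. \<psi> z * (b t * \<psi> ((z ^ 2 - x ^ 2) * t))) / Gs b"
  proof -
    have "(\<Sum>z\<in>UNIV. \<psi> z * inverse (b (z ^ 2 - x ^ 2)))
        = (\<Sum>z\<in>UNIV. (\<Sum>t\<in>UNIV. \<psi> z * (b t * \<psi> ((z ^ 2 - x ^ 2) * t))) / Gs b)"
    proof (rule sum.cong[OF refl])
      fix z :: 'a
      have "\<psi> z * inverse (b (z ^ 2 - x ^ 2)) = \<psi> z * ((\<Sum>t\<in>UNIV. b t * \<psi> ((z ^ 2 - x ^ 2) * t)) / Gs b)"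
        by (simp only: inv)
      also have "\<dots> = (\<psi> z * (\<Sum>t\<in>UNIV. b t * \<psi> ((z ^ 2 - x ^ 2) * t))) / Gs b" by (rule times_divide_eq_right)
      also have "\<dots> = (\<Sum>t\<in>UNIV. \<psi> z * (b t * \<psi> ((z ^ 2 - x ^ 2) * t))) / Gs b" by (simp only: sum_distrib_left)
      finally show "\<psi> z * inverse (b (z ^ 2 - x ^ 2)) = (\<Sum>t\<in>UNIV. \<psi> z * (b t * \<psi> ((z ^ 2 - x ^ 2) * t))) / Gs b" .
    qed
    also have "\<dots> = (\<Sum>z\<in>UNIV. \<Sum>t\<in>UNIV. \<psi> z * (b t * \<psi> ((z ^ 2 - x ^ 2) * t))) / Gs b"
      by (rule sum_divide_distrib[symmetric])
    finally show ?thesis .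
  qed
  also have "(\<Sum>z\<in>UNIV. \<Sum>t\<in>UNIV. \<psi> z * (b t * \<psi> ((z ^ 2 - x ^ 2) * t)))
      = (\<Sum>t\<in>UNIV. b t * \<psi> (- (x ^ 2 * t)) * (\<Sum>z\<in>UNIV. \<psi> (t * z ^ 2 + z)))"
  proof -
    have "\<psi> z * (b t * \<psi> ((z ^ 2 - x ^ 2) * t)) = b t * \<psi> (- (x ^ 2 * t)) * \<psi> (t * z ^ 2 + z)" for z t
    proof -
      have h: "\<psi> z * \<psi> ((z ^ 2 - x ^ 2) * t) = \<psi> (- (x ^ 2 * t)) * \<psi> (t * z ^ 2 + z)"
        by (simp only: psi_add[symmetric]) (rule arg_cong[where f = \<psi>], simp add: algebra_simps)
      have "\<psi> z * (b t * \<psi> ((z ^ 2 - x ^ 2) * t)) = b t * (\<psi> z * \<psi> ((z ^ 2 - x ^ 2) * t))"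
        by (simp only: mult.left_commute)
      also have "\<dots> = b t * (\<psi> (- (x ^ 2 * t)) * \<psi> (t * z ^ 2 + z))" by (simp only: h)
      finally show ?thesis by (simp only: mult.assoc)
    qed
    hence "(\<Sum>z\<in>UNIV. \<Sum>t\<in>UNIV. \<psi> z * (b t * \<psi> ((z ^ 2 - x ^ 2) * t)))
        = (\<Sum>z\<in>UNIV. \<Sum>t\<in>UNIV. b t * \<psi> (- (x ^ 2 * t)) * \<psi> (t * z ^ 2 + z))" by (simp only:)
    also have "\<dots> = (\<Sum>t\<in>UNIV. \<Sum>z\<in>UNIV. b t * \<psi> (- (x ^ 2 * t)) * \<psi> (t * z ^ 2 + z))" by (rule sum.swap)
    also have "\<dots> = (\<Sum>t\<in>UNIV. b t * \<psi> (- (x ^ 2 * t)) * (\<Sum>z\<in>UNIV. \<psi> (t * z ^ 2 + z)))"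
      by (simp only: sum_distrib_left)
    finally show ?thesis .
  qed
  also have "\<dots> = (\<Sum>t\<in>UNIV. Gs qchar * (b t * qchar t * \<psi> (- (x ^ 2 * t)) * \<psi> (- (1 / (4 * t)))))"
  proof (rule sum.cong[OF refl])
    fix t :: 'a
    show "b t * \<psi> (- (x ^ 2 * t)) * (\<Sum>z\<in>UNIV. \<psi> (t * z ^ 2 + z))
        = Gs qchar * (b t * qchar t * \<psi> (- (x ^ 2 * t)) * \<psi> (- (1 / (4 * t))))"
    proof (cases "t = 0")
      case True thus ?thesis using b by simp
    next
      case False thus ?thesis by (simp only: complete_sq[OF False] mult_ac)
    qed
  qed
  also have "\<dots> = (\<Sum>u\<in>UNIV. Gs qchar * (b (- 1 / (4 * u)) * qchar (- 1 / (4 * u)) * \<psi> (- (x ^ 2 * (- 1 / (4 * u)))) * \<psi> (- (1 / (4 * (- 1 / (4 * u)))))))"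
    by (rule sum_bij_UNIV[symmetric]) (rule bijI2[where g = "\<lambda>u. - 1 / (4 * u)"], simp_all only: T_inv)
  also have "\<dots> = (\<Sum>u\<in>UNIV. Gs qchar * ((b (-1) * (qchar::'a \<Rightarrow> complex) (-1) * inverse (b 4)) * (inverse (b u) * qchar u * \<psi> (u + (x ^ 2 / 4) / u))))"
  proof (rule sum.cong[OF refl])
    fix u :: 'a
    show "Gs qchar * (b (- 1 / (4 * u)) * qchar (- 1 / (4 * u)) * \<psi> (- (x ^ 2 * (- 1 / (4 * u)))) * \<psi> (- (1 / (4 * (- 1 / (4 * u))))))
        = Gs qchar * ((b (-1) * (qchar::'a \<Rightarrow> complex) (-1) * inverse (b 4)) * (inverse (b u) * qchar u * \<psi> (u + (x ^ 2 / 4) / u)))"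
    proof (cases "u = 0")
      case True
      have z1: "b (- 1 / (4 * u)) = 0" using True b by simp
      have z2: "inverse (b u) = 0" using True b by simp
      show ?thesis by (simp only: z1 z2 mult_zero_left mult_zero_right)
    next
      case False
      have e1: "- 1 / (4 * u) = (-1) * inverse (4 * u)" by (rule divide_inverse)
      have bb: "b (- 1 / (4 * u)) = b (-1) * inverse (b 4) * inverse (b u)"
        by (simp only: e1 mchars_mult[OF b] mchars_inverse[OF b] inverse_mult_distrib mult.assoc)
      have qq: "qchar (- 1 / (4 * u)) = (qchar::'a \<Rightarrow> complex) (-1) * qchar u"
        by (simp only: e1 mchars_mult[OF q] mchars_inverse[OF q] inverse_mult_distrib qchar_inverse qchar_4[OF two] inverse_1 mult_1)
      have pp: "\<psi> (- (x ^ 2 * (- 1 / (4 * u)))) * \<psi> (- (1 / (4 * (- 1 / (4 * u))))) = \<psi> (u + (x ^ 2 / 4) / u)"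
      proof -
        have "- (x ^ 2 * (- 1 / (4 * u))) = (x ^ 2 / 4) / u" using False four_nz by (simp add: field_simps)
        moreover have "- (1 / (4 * (- 1 / (4 * u)))) = u" by (simp only: T4) simp
        ultimately show ?thesis by (simp only: psi_add[symmetric] add.commute)
      qed
      show ?thesis by (simp only: bb qq mult.assoc[symmetric] pp[symmetric]) (simp only: mult_ac)
    qed
  qed
  also have "\<dots> = Gs qchar * (b (-1) * (qchar::'a \<Rightarrow> complex) (-1) * inverse (b 4)) * (\<Sum>u\<in>UNIV. inverse (b u) * qchar u * \<psi> (u + (x ^ 2 / 4) / u))"
    by (simp only: sum_distrib_left mult.assoc)
  finally show ?thesis by (simp only: divide_inverse mult_ac)
qed
end


lemma star_alg:
  fixes G0bq gb b4 G0bb gq Q b1 q1 M K :: complex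
  assumes d: "G0bq * gb = inverse b4 * G0bb * gq" and gb: "gb \<noteq> 0" and b4: "b4 \<noteq> 0" and Q: "Q \<noteq> 0"
  shows "G0bq * (b1 * q1) / Q * (M * K) = - (G0bb / (Q * gb)) * (M * (- gb) * ((- gq) / (- gb) * (b1 * q1 * inverse b4) * K))"
proof -
  have "G0bq = (G0bq * gb) / gb" using gb by simp
  also have "\<dots> = inverse b4 * G0bb * gq / gb" using d by (simp only:)
  finally have "G0bq = inverse b4 * G0bb * gq / gb" .
  thus ?thesis using gb b4 Q by (simp add: field_simps)
qed

lemma cancel_px: "(p::complex) \<noteq> 0 \<Longrightarrow> p * (A * (B * (inverse p * T))) = A * (B * T)"
  by (simp add: field_simps)

context ffc
begin

lemma star: assumes b: "b \<in> mchars" and ne: "b \<noteq> eps"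
  shows "(\<Sum>v\<in>mchars. v (x ^ 2 / 4) / (poch0 \<psi> (chmul b qchar) v * poch0 \<psi> eps v))
       = \<psi> x * (\<Sum>v\<in>mchars. poch \<psi> b v / (poch0 \<psi> (chmul b b) v * poch0 \<psi> eps v) * v (2 * x))"
proof (cases "x = 0")
  case True thus ?thesis by simp
next
  case False
  have q: "(qchar :: 'a \<Rightarrow> complex) \<in> mchars" by (rule qchar_mchars[OF two])
  have bq: "chmul b qchar \<in> mchars" using b q by simp
  have y0: "x ^ 2 / 4 \<noteq> 0" using False four_nz by simp
  have w0: "2 * x \<noteq> 0" using False two by simp
  define K where "K = (\<Sum>u\<in>UNIV. inverse (b u) * qchar u * \<psi> (u + (x ^ 2 / 4) / u))"
  have L: "(\<Sum>v\<in>mchars. v (x ^ 2 / 4) / (poch0 \<psi> (chmul b qchar) v * poch0 \<psi> eps v))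
      = (gauss0 \<psi> (chmul b qchar) * (b (-1) * (qchar::'a \<Rightarrow> complex) (-1)) / of_nat CARD('a)) *
        (of_nat (CARD('a) - 1) * K)"
  proof -
    have "(\<Sum>v\<in>mchars. v (x ^ 2 / 4) / (poch0 \<psi> (chmul b qchar) v * poch0 \<psi> eps v))
        = (\<Sum>v\<in>mchars. (gauss0 \<psi> (chmul b qchar) * (b (-1) * (qchar::'a \<Rightarrow> complex) (-1)) / of_nat CARD('a)) *
         (Gs (chinv (chmul (chmul b qchar) v)) * Gs (chinv v) * v (x ^ 2 / 4)))"
      by (rule sum.cong[OF refl]) (rule lhs_term[OF b])
    also have "\<dots> = (gauss0 \<psi> (chmul b qchar) * (b (-1) * (qchar::'a \<Rightarrow> complex) (-1)) / of_nat CARD('a)) *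
         (\<Sum>v\<in>mchars. Gs (chinv (chmul (chmul b qchar) v)) * Gs (chinv v) * v (x ^ 2 / 4))"
      by (rule sum_distrib_left[symmetric])
    also have "(\<Sum>v\<in>mchars. Gs (chinv (chmul (chmul b qchar) v)) * Gs (chinv v) * v (x ^ 2 / 4))
        = of_nat (CARD('a) - 1) * (\<Sum>u\<in>UNIV. inverse (chmul b qchar u) * \<psi> (u + (x ^ 2 / 4) / u))"
      by (rule collapse2[OF bq y0])
    also have "(\<Sum>u\<in>UNIV. inverse (chmul b qchar u) * \<psi> (u + (x ^ 2 / 4) / u)) = K"
      unfolding K_def by (rule sum.cong[OF refl]) (simp add: qchar_inverse)
    finally show ?thesis .
  qed
  have R: "\<psi> x * (\<Sum>v\<in>mchars. poch \<psi> b v / (poch0 \<psi> (chmul b b) v * poch0 \<psi> eps v) * v (2 * x))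
      = - (gauss0 \<psi> (chmul b b) / (of_nat CARD('a) * gauss \<psi> b)) *
        (of_nat (CARD('a) - 1) * Gs b * ((Gs qchar / Gs b) * (b (-1) * (qchar::'a \<Rightarrow> complex) (-1) * inverse (b 4)) * K))"
  proof -
    have "(\<Sum>v\<in>mchars. poch \<psi> b v / (poch0 \<psi> (chmul b b) v * poch0 \<psi> eps v) * v (2 * x))
        = (\<Sum>v\<in>mchars. - (gauss0 \<psi> (chmul b b) / (of_nat CARD('a) * gauss \<psi> b)) *
         (Gs (chmul b v) * Gs (chinv (chmul (chmul b b) v)) * Gs (chinv v) * v (2 * x)))"
      by (rule sum.cong[OF refl]) (rule rhs_term[OF b])
    also have "\<dots> = - (gauss0 \<psi> (chmul b b) / (of_nat CARD('a) * gauss \<psi> b)) *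
         (\<Sum>v\<in>mchars. Gs (chmul b v) * Gs (chinv (chmul (chmul b b) v)) * Gs (chinv v) * v (2 * x))"
      by (rule sum_distrib_left[symmetric])
    also have "(\<Sum>v\<in>mchars. Gs (chmul b v) * Gs (chinv (chmul (chmul b b) v)) * Gs (chinv v) * v (2 * x))
       = of_nat (CARD('a) - 1) * Gs b * (\<Sum>c\<in>UNIV. \<psi> c * inverse (b (c * (c + 2 * x))))"
      by (rule collapse3[OF b ne w0])
    also have "(\<Sum>c\<in>UNIV. \<psi> c * inverse (b (c * (c + 2 * x))))
        = (\<Sum>z\<in>UNIV. \<psi> (z - x) * inverse (b ((z - x) * (z - x + 2 * x))))"
      by (rule sum_bij_UNIV[symmetric]) (rule bijI2[where g = "\<lambda>z. z + x"], auto)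
    also have "\<dots> = inverse (\<psi> x) * (\<Sum>z\<in>UNIV. \<psi> z * inverse (b (z ^ 2 - x ^ 2)))"
    proof -
      have "(z - x) * (z - x + 2 * x) = z ^ 2 - x ^ 2" for z :: 'a
        by (simp add: algebra_simps power2_eq_square)
      hence "(\<Sum>z\<in>UNIV. \<psi> (z - x) * inverse (b ((z - x) * (z - x + 2 * x))))
          = (\<Sum>z\<in>UNIV. inverse (\<psi> x) * (\<psi> z * inverse (b (z ^ 2 - x ^ 2))))"
        by (simp only: psi_diff mult_ac)
      thus ?thesis by (simp only: sum_distrib_left)
    qed
    also have "(\<Sum>z\<in>UNIV. \<psi> z * inverse (b (z ^ 2 - x ^ 2)))
        = (Gs qchar / Gs b) * (b (-1) * (qchar::'a \<Rightarrow> complex) (-1) * inverse (b 4)) * K"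
      unfolding K_def by (rule HK[OF b ne])
    finally have e: "(\<Sum>v\<in>mchars. poch \<psi> b v / (poch0 \<psi> (chmul b b) v * poch0 \<psi> eps v) * v (2 * x))
      = - (gauss0 \<psi> (chmul b b) / (of_nat CARD('a) * gauss \<psi> b)) *
        (of_nat (CARD('a) - 1) * Gs b * (inverse (\<psi> x) * ((Gs qchar / Gs b) * (b (-1) * (qchar::'a \<Rightarrow> complex) (-1) * inverse (b 4)) * K)))" .
    show ?thesis unfolding e by (rule cancel_px[OF psi_nz])
  qed
  have d: "gauss0 \<psi> (chmul b qchar) * gauss \<psi> b = inverse (b 4) * gauss0 \<psi> (chmul b b) * gauss \<psi> qchar"
    by (rule dup0[OF b ne])
  have "(gauss0 \<psi> (chmul b qchar) * (b (-1) * (qchar::'a \<Rightarrow> complex) (-1)) / of_nat CARD('a)) * (of_nat (CARD('a) - 1) * K)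
    = - (gauss0 \<psi> (chmul b b) / (of_nat CARD('a) * gauss \<psi> b)) *
        (of_nat (CARD('a) - 1) * (- gauss \<psi> b) * ((- gauss \<psi> qchar) / (- gauss \<psi> b) * (b (-1) * (qchar::'a \<Rightarrow> complex) (-1) * inverse (b 4)) * K))"
    by (rule star_alg[OF d gauss_nz[OF b] mchars_nz[OF b four_nz] q_nz])
  also have "\<dots> = - (gauss0 \<psi> (chmul b b) / (of_nat CARD('a) * gauss \<psi> b)) *
        (of_nat (CARD('a) - 1) * Gs b * ((Gs qchar / Gs b) * (b (-1) * (qchar::'a \<Rightarrow> complex) (-1) * inverse (b 4)) * K))"
  proof -
    have e2: "- gauss \<psi> b = Gs b" using gauss_Gs[OF b] by simp
    have e3: "- gauss \<psi> qchar = Gs qchar" using gauss_Gs[OF q] by simp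
    show ?thesis by (simp only: e2 e3)
  qed
  finally show ?thesis using L R by (simp only:)
qed

end


lemma chprod_apply: "chprod n \<nu> x = (\<Prod>i\<in>{1..n}. \<nu> i x)" by (simp add: chprod_def)

lemma chprod_mchars: assumes n: "1 \<le> n" and v: "\<And>i. i \<in> {1..n} \<Longrightarrow> \<nu> i \<in> mchars"
  shows "chprod n \<nu> \<in> mchars"
proof (rule mcharsI)
  have "\<nu> 1 0 = 0" using v[of 1] n by simp
  thus "chprod n \<nu> 0 = 0" unfolding chprod_apply using n by (subst prod_zero_iff) auto
next
  fix x :: 'a assume x: "x \<noteq> 0"
  have "\<forall>i\<in>{1..n}. \<nu> i x \<noteq> 0" using v mchars_nz x by blast
  thus "chprod n \<nu> x \<noteq> 0" unfolding chprod_apply by simp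
next
  fix x y :: 'a
  show "chprod n \<nu> (x * y) = chprod n \<nu> x * chprod n \<nu> y"
    unfolding chprod_apply by (simp add: mchars_mult v prod.distrib)
qed

lemma alg2:
  fixes A B C D a4 n4 X Y P :: complex
  assumes "A * B = inverse (a4 * n4) * X * P" "C * D = inverse a4 * Y * P"
    "a4 \<noteq> 0" "n4 \<noteq> 0" "P \<noteq> 0" "Y \<noteq> 0" "C \<noteq> 0" "D \<noteq> 0"
  shows "A / C * (B / D) = inverse n4 * X / Y"
proof -
  have "A / C * (B / D) = (A * B) / (C * D)" by simp
  also have "\<dots> = (inverse (a4 * n4) * X * P) / (inverse a4 * Y * P)" using assms(1,2) by simp
  also have "\<dots> = inverse n4 * X / Y" using assms(3-8) by (simp add: field_simps)
  finally show ?thesis .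
qed

lemma alg3: "inverse (n::complex) * (- S) / G / D * P = - (1 / G) * (S * (inverse n * P / D))"
  by (simp add: divide_inverse mult_ac)

lemma alg4: "(a::complex) * a * (ib * P / D) = a * (a * (P * ib)) / D"
  by (simp add: divide_inverse mult_ac)

lemma sq4: "(s * l) ^ 2 / 4 = s * (s * (l ^ 2 * inverse (4::'a::field)))"
  by (simp only: power_mult_distrib divide_inverse power2_eq_square mult_ac)

context ffc
begin

lemma poch_dup: assumes a: "a \<in> mchars" and N: "N \<in> mchars"
  shows "poch \<psi> a N * poch \<psi> (chmul a qchar) N = inverse (N 4) * gauss \<psi> (chmul (chmul a a) (chmul N N)) / gauss \<psi> (chmul a a)"
proof -
  have q: "(qchar :: 'a \<Rightarrow> complex) \<in> mchars" by (rule qchar_mchars[OF two])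
  have aN: "chmul a N \<in> mchars" using a N by simp
  have d1: "gauss \<psi> (chmul a N) * gauss \<psi> (chmul (chmul a N) qchar)
      = inverse (chmul a N 4) * gauss \<psi> (chmul (chmul a N) (chmul a N)) * gauss \<psi> qchar"
    by (rule dupG[OF aN])
  have d2: "gauss \<psi> a * gauss \<psi> (chmul a qchar) = inverse (a 4) * gauss \<psi> (chmul a a) * gauss \<psi> qchar"
    by (rule dupG[OF a])
  have r1: "chmul (chmul a qchar) N = chmul (chmul a N) qchar" by (auto simp: fun_eq_iff mult_ac)
  have r2: "chmul (chmul a N) (chmul a N) = chmul (chmul a a) (chmul N N)" by (auto simp: fun_eq_iff mult_ac)
  have d1': "gauss \<psi> (chmul a N) * gauss \<psi> (chmul (chmul a qchar) N)
      = inverse (a 4 * N 4) * gauss \<psi> (chmul (chmul a a) (chmul N N)) * gauss \<psi> qchar"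
    using d1 unfolding r1 r2 by simp
  show ?thesis unfolding poch_def
    by (rule alg2[OF d1' d2 mchars_nz[OF a four_nz] mchars_nz[OF N four_nz] gauss_nz[OF q]
          gauss_nz[OF chmul_mchars[OF a a]] gauss_nz[OF a] gauss_nz[OF chmul_mchars[OF a q]]])
qed

lemma gauss_expand: assumes c: "c \<in> mchars"
  shows "gauss \<psi> c = - (\<Sum>s\<in>UNIV. \<psi> s * c s)"
  using gauss_Gs[OF c] by (simp add: Gs_def)


lemma PiE_mchars: "\<nu> \<in> {1..n} \<rightarrow>\<^sub>E mchars \<Longrightarrow> i \<in> {1..n} \<Longrightarrow> \<nu> i \<in> mchars"
  by (auto simp: PiE_iff)

lemma prod_char_expand: assumes v: "\<And>i. i \<in> {1..n} \<Longrightarrow> \<nu> i \<in> mchars"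
  shows "(\<Prod>i\<in>{1..n}. \<nu> i ((s * lam i) ^ 2 / 4))
       = chprod n \<nu> s * (chprod n \<nu> s * ((\<Prod>i\<in>{1..n}. \<nu> i ((lam i) ^ 2)) * inverse (chprod n \<nu> 4)))"
proof -
  have "(\<Prod>i\<in>{1..n}. \<nu> i ((s * lam i) ^ 2 / 4))
      = (\<Prod>i\<in>{1..n}. \<nu> i s * (\<nu> i s * (\<nu> i ((lam i) ^ 2) * inverse (\<nu> i 4))))"
  proof (rule prod.cong[OF refl])
    fix i assume i: "i \<in> {1..n}"
    show "\<nu> i ((s * lam i) ^ 2 / 4) = \<nu> i s * (\<nu> i s * (\<nu> i ((lam i) ^ 2) * inverse (\<nu> i 4)))"
      by (simp only: sq4 mchars_mult[OF v[OF i]] mchars_inverse[OF v[OF i]])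
  qed
  also have "\<dots> = chprod n \<nu> s * (chprod n \<nu> s * ((\<Prod>i\<in>{1..n}. \<nu> i ((lam i) ^ 2)) * inverse (chprod n \<nu> 4)))"
    unfolding chprod_apply prod.distrib prod_inversef[symmetric] by (simp only: comp_def)
  finally show ?thesis .
qed

lemma FC_term:
  assumes a: "\<alpha> \<in> mchars" and n: "1 \<le> n" and v: "\<nu> \<in> {1..n} \<rightarrow>\<^sub>E mchars"
  shows "poch \<psi> \<alpha> (chprod n \<nu>) * poch \<psi> (chmul \<alpha> qchar) (chprod n \<nu>)
      / (\<Prod>i\<in>{1..n}. poch0 \<psi> (chmul (\<beta> i) qchar) (\<nu> i) * poch0 \<psi> eps (\<nu> i)) * (\<Prod>i\<in>{1..n}. \<nu> i ((lam i)^2))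
   = - (1 / gauss \<psi> (chmul \<alpha> \<alpha>)) * (\<Sum>s\<in>UNIV. \<psi> s * (\<alpha> s * \<alpha> s) *
       (\<Prod>i\<in>{1..n}. \<nu> i ((s * lam i)^2 / 4) / (poch0 \<psi> (chmul (\<beta> i) qchar) (\<nu> i) * poch0 \<psi> eps (\<nu> i))))"
proof -
  have vi: "\<And>i. i \<in> {1..n} \<Longrightarrow> \<nu> i \<in> mchars" using PiE_mchars[OF v] .
  define N where "N = chprod n \<nu>"
  have Nm: "N \<in> mchars" unfolding N_def by (rule chprod_mchars[OF n vi])
  define D where "D = (\<Prod>i\<in>{1..n}. poch0 \<psi> (chmul (\<beta> i) qchar) (\<nu> i) * poch0 \<psi> eps (\<nu> i))"
  define P where "P = (\<Prod>i\<in>{1..n}. \<nu> i ((lam i)^2))"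
  have g: "gauss \<psi> (chmul (chmul \<alpha> \<alpha>) (chmul N N)) = - (\<Sum>s\<in>UNIV. \<psi> s * (\<alpha> s * \<alpha> s) * (N s * N s))"
    using gauss_expand[of "chmul (chmul \<alpha> \<alpha>) (chmul N N)"] a Nm by (simp add: mult.assoc)
  have "poch \<psi> \<alpha> N * poch \<psi> (chmul \<alpha> qchar) N / D * P
      = inverse (N 4) * (- (\<Sum>s\<in>UNIV. \<psi> s * (\<alpha> s * \<alpha> s) * (N s * N s))) / gauss \<psi> (chmul \<alpha> \<alpha>) / D * P"
    by (simp only: poch_dup[OF a Nm] g)
  also have "\<dots> = - (1 / gauss \<psi> (chmul \<alpha> \<alpha>)) * ((\<Sum>s\<in>UNIV. \<psi> s * (\<alpha> s * \<alpha> s) * (N s * N s)) * (inverse (N 4) * P / D))"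
    by (rule alg3)
  also have "(\<Sum>s\<in>UNIV. \<psi> s * (\<alpha> s * \<alpha> s) * (N s * N s)) * (inverse (N 4) * P / D)
      = (\<Sum>s\<in>UNIV. \<psi> s * (\<alpha> s * \<alpha> s) * (N s * N s * (inverse (N 4) * P / D)))"
    by (simp only: sum_distrib_right mult.assoc)
  also have "\<dots> = (\<Sum>s\<in>UNIV. \<psi> s * (\<alpha> s * \<alpha> s) *
       (\<Prod>i\<in>{1..n}. \<nu> i ((s * lam i)^2 / 4) / (poch0 \<psi> (chmul (\<beta> i) qchar) (\<nu> i) * poch0 \<psi> eps (\<nu> i))))"
  proof (rule sum.cong[OF refl])
    fix s :: 'a
    have "(\<Prod>i\<in>{1..n}. \<nu> i ((s * lam i)^2 / 4) / (poch0 \<psi> (chmul (\<beta> i) qchar) (\<nu> i) * poch0 \<psi> eps (\<nu> i)))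
        = (\<Prod>i\<in>{1..n}. \<nu> i ((s * lam i)^2 / 4)) / D"
      unfolding D_def by (rule prod_dividef)
    also have "\<dots> = N s * (N s * (P * inverse (N 4))) / D"
      unfolding N_def P_def by (simp only: prod_char_expand[OF vi])
    finally have "(\<Prod>i\<in>{1..n}. \<nu> i ((s * lam i)^2 / 4) / (poch0 \<psi> (chmul (\<beta> i) qchar) (\<nu> i) * poch0 \<psi> eps (\<nu> i)))
        = N s * N s * (inverse (N 4) * P / D)" by (simp only: alg4)
    thus "\<psi> s * (\<alpha> s * \<alpha> s) * (N s * N s * (inverse (N 4) * P / D)) = \<psi> s * (\<alpha> s * \<alpha> s) *
       (\<Prod>i\<in>{1..n}. \<nu> i ((s * lam i)^2 / 4) / (poch0 \<psi> (chmul (\<beta> i) qchar) (\<nu> i) * poch0 \<psi> eps (\<nu> i)))"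
      by (simp only:)
  qed
  finally show ?thesis unfolding N_def D_def P_def .
qed

lemma FA_term:
  assumes a: "\<alpha> \<in> mchars" and n: "1 \<le> n" and v: "\<nu> \<in> {1..n} \<rightarrow>\<^sub>E mchars"
  shows "poch \<psi> (chmul \<alpha> \<alpha>) (chprod n \<nu>) * (\<Prod>i\<in>{1..n}. poch \<psi> (\<beta> i) (\<nu> i))
      / (\<Prod>i\<in>{1..n}. poch0 \<psi> (chmul (\<beta> i) (\<beta> i)) (\<nu> i) * poch0 \<psi> eps (\<nu> i)) * (\<Prod>i\<in>{1..n}. \<nu> i (z i))
   = - (1 / gauss \<psi> (chmul \<alpha> \<alpha>)) * (\<Sum>s\<in>UNIV. \<psi> s * (\<alpha> s * \<alpha> s) *
       (\<Prod>i\<in>{1..n}. poch \<psi> (\<beta> i) (\<nu> i) / (poch0 \<psi> (chmul (\<beta> i) (\<beta> i)) (\<nu> i) * poch0 \<psi> eps (\<nu> i)) * \<nu> i (s * z i)))"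
proof -
  have vi: "\<And>i. i \<in> {1..n} \<Longrightarrow> \<nu> i \<in> mchars" using PiE_mchars[OF v] .
  define N where "N = chprod n \<nu>"
  have Nm: "N \<in> mchars" unfolding N_def by (rule chprod_mchars[OF n vi])
  define B where "B = (\<Prod>i\<in>{1..n}. poch \<psi> (\<beta> i) (\<nu> i))"
  define D where "D = (\<Prod>i\<in>{1..n}. poch0 \<psi> (chmul (\<beta> i) (\<beta> i)) (\<nu> i) * poch0 \<psi> eps (\<nu> i))"
  define P where "P = (\<Prod>i\<in>{1..n}. \<nu> i (z i))"
  have g: "gauss \<psi> (chmul (chmul \<alpha> \<alpha>) N) = - (\<Sum>s\<in>UNIV. \<psi> s * (\<alpha> s * \<alpha> s) * N s)"
    using gauss_expand[of "chmul (chmul \<alpha> \<alpha>) N"] a Nm by (simp add: mult.assoc)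
  have "poch \<psi> (chmul \<alpha> \<alpha>) N * B / D * P
      = - (1 / gauss \<psi> (chmul \<alpha> \<alpha>)) * ((\<Sum>s\<in>UNIV. \<psi> s * (\<alpha> s * \<alpha> s) * N s) * (B * P / D))"
    unfolding poch_def g by (simp add: divide_inverse mult_ac)
  also have "(\<Sum>s\<in>UNIV. \<psi> s * (\<alpha> s * \<alpha> s) * N s) * (B * P / D)
      = (\<Sum>s\<in>UNIV. \<psi> s * (\<alpha> s * \<alpha> s) * (N s * (B * P / D)))"
    by (simp only: sum_distrib_right mult.assoc)
  also have "\<dots> = (\<Sum>s\<in>UNIV. \<psi> s * (\<alpha> s * \<alpha> s) *
       (\<Prod>i\<in>{1..n}. poch \<psi> (\<beta> i) (\<nu> i) / (poch0 \<psi> (chmul (\<beta> i) (\<beta> i)) (\<nu> i) * poch0 \<psi> eps (\<nu> i)) * \<nu> i (s * z i)))"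
  proof (rule sum.cong[OF refl])
    fix s :: 'a
    have "(\<Prod>i\<in>{1..n}. poch \<psi> (\<beta> i) (\<nu> i) / (poch0 \<psi> (chmul (\<beta> i) (\<beta> i)) (\<nu> i) * poch0 \<psi> eps (\<nu> i)) * \<nu> i (s * z i))
        = (\<Prod>i\<in>{1..n}. poch \<psi> (\<beta> i) (\<nu> i) / (poch0 \<psi> (chmul (\<beta> i) (\<beta> i)) (\<nu> i) * poch0 \<psi> eps (\<nu> i)))
          * (\<Prod>i\<in>{1..n}. \<nu> i s) * P"
    proof -
      have "(\<Prod>i\<in>{1..n}. poch \<psi> (\<beta> i) (\<nu> i) / (poch0 \<psi> (chmul (\<beta> i) (\<beta> i)) (\<nu> i) * poch0 \<psi> eps (\<nu> i)) * \<nu> i (s * z i))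
        = (\<Prod>i\<in>{1..n}. poch \<psi> (\<beta> i) (\<nu> i) / (poch0 \<psi> (chmul (\<beta> i) (\<beta> i)) (\<nu> i) * poch0 \<psi> eps (\<nu> i)) * (\<nu> i s * \<nu> i (z i)))"
        by (rule prod.cong[OF refl]) (simp only: mchars_mult[OF vi])
      thus ?thesis unfolding P_def by (simp only: prod.distrib mult.assoc)
    qed
    also have "\<dots> = N s * (B * P / D)"
      unfolding N_def B_def D_def chprod_apply by (simp only: prod_dividef) (simp add: divide_inverse mult_ac)
    finally show "\<psi> s * (\<alpha> s * \<alpha> s) * (N s * (B * P / D)) = \<psi> s * (\<alpha> s * \<alpha> s) *
       (\<Prod>i\<in>{1..n}. poch \<psi> (\<beta> i) (\<nu> i) / (poch0 \<psi> (chmul (\<beta> i) (\<beta> i)) (\<nu> i) * poch0 \<psi> eps (\<nu> i)) * \<nu> i (s * z i))"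
      by (simp only:)
  qed
  finally show ?thesis unfolding N_def B_def D_def P_def .
qed
end


lemma sum_PiE_factor:
  fixes h :: "'a::{finite,field} \<Rightarrow> complex" and f :: "nat \<Rightarrow> 'a \<Rightarrow> ('a \<Rightarrow> complex) \<Rightarrow> complex"
  shows "(\<Sum>\<nu>\<in>{1..n} \<rightarrow>\<^sub>E mchars. C * (\<Sum>s\<in>UNIV. h s * (\<Prod>i\<in>{1..n}. f i s (\<nu> i))))
       = C * (\<Sum>s\<in>UNIV. h s * (\<Prod>i\<in>{1..n}. \<Sum>v\<in>mchars. f i s v))"
proof -
  have "(\<Sum>\<nu>\<in>{1..n} \<rightarrow>\<^sub>E mchars. C * (\<Sum>s\<in>UNIV. h s * (\<Prod>i\<in>{1..n}. f i s (\<nu> i))))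
      = C * (\<Sum>\<nu>\<in>{1..n} \<rightarrow>\<^sub>E mchars. \<Sum>s\<in>UNIV. h s * (\<Prod>i\<in>{1..n}. f i s (\<nu> i)))"
    by (rule sum_distrib_left[symmetric])
  also have "(\<Sum>\<nu>\<in>{1..n} \<rightarrow>\<^sub>E mchars. \<Sum>s\<in>UNIV. h s * (\<Prod>i\<in>{1..n}. f i s (\<nu> i)))
      = (\<Sum>s\<in>UNIV. \<Sum>\<nu>\<in>{1..n} \<rightarrow>\<^sub>E mchars. h s * (\<Prod>i\<in>{1..n}. f i s (\<nu> i)))"
    by (rule sum.swap)
  also have "\<dots> = (\<Sum>s\<in>UNIV. h s * (\<Prod>i\<in>{1..n}. \<Sum>v\<in>mchars. f i s v))"
  proof (rule sum.cong[OF refl])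
    fix s :: 'a
    have "(\<Prod>i\<in>{1..n}. \<Sum>v\<in>mchars. f i s v) = (\<Sum>\<nu>\<in>{1..n} \<rightarrow>\<^sub>E mchars. \<Prod>i\<in>{1..n}. f i s (\<nu> i))"
      by (rule prod_sum_PiE) auto
    thus "(\<Sum>\<nu>\<in>{1..n} \<rightarrow>\<^sub>E mchars. h s * (\<Prod>i\<in>{1..n}. f i s (\<nu> i))) = h s * (\<Prod>i\<in>{1..n}. \<Sum>v\<in>mchars. f i s v)"
      by (simp only: sum_distrib_left)
  qed
  finally show ?thesis .
qed

context ffc
begin

lemma FC_red: assumes a: "\<alpha> \<in> mchars" and n: "1 \<le> n"
  shows "FC \<psi> n \<alpha> (chmul \<alpha> qchar) (\<lambda>i. chmul (\<beta> i) qchar) (\<lambda>i. (lam i)^2)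
    = 1 / (1 - of_nat CARD('a)) ^ n * (- (1 / gauss \<psi> (chmul \<alpha> \<alpha>)) * (\<Sum>s\<in>UNIV. \<psi> s * (\<alpha> s * \<alpha> s) *
       (\<Prod>i\<in>{1..n}. \<Sum>v\<in>mchars. v ((s * lam i)^2 / 4) / (poch0 \<psi> (chmul (\<beta> i) qchar) v * poch0 \<psi> eps v))))"
  unfolding FC_def
  by (subst sum.cong[OF refl FC_term[OF a n]], assumption) (rule arg_cong[where f = "\<lambda>x. _ * x"], rule sum_PiE_factor)

lemma FA_red: assumes a: "\<alpha> \<in> mchars" and n: "1 \<le> n"
  shows "FA \<psi> n (chmul \<alpha> \<alpha>) \<beta> (\<lambda>i. chmul (\<beta> i) (\<beta> i)) z
    = 1 / (1 - of_nat CARD('a)) ^ n * (- (1 / gauss \<psi> (chmul \<alpha> \<alpha>)) * (\<Sum>s\<in>UNIV. \<psi> s * (\<alpha> s * \<alpha> s) *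
       (\<Prod>i\<in>{1..n}. \<Sum>v\<in>mchars. poch \<psi> (\<beta> i) v / (poch0 \<psi> (chmul (\<beta> i) (\<beta> i)) v * poch0 \<psi> eps v) * v (s * z i))))"
  unfolding FA_def
  by (subst sum.cong[OF refl FA_term[OF a n]], assumption) (rule arg_cong[where f = "\<lambda>x. _ * x"], rule sum_PiE_factor)


lemma main_loc:
  assumes a: "\<alpha> \<in> mchars" and n: "1 \<le> n"
    and bs: "\<forall>i\<in>{1..n}. \<beta> i \<in> mchars \<and> \<beta> i \<noteq> eps"
    and L: "(\<Sum>i=1..n. lam i) \<noteq> -1"
  shows "FC \<psi> n \<alpha> (chmul \<alpha> qchar) (\<lambda>i. chmul (\<beta> i) qchar) (\<lambda>i. (lam i)^2)
       = (chinv \<alpha> (1 + (\<Sum>i=1..n. lam i)))^2 *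
         FA \<psi> n (chmul \<alpha> \<alpha>) \<beta> (\<lambda>i. chmul (\<beta> i) (\<beta> i))
            (\<lambda>i. 2 * lam i / (1 + (\<Sum>j=1..n. lam j)))"
proof -
  define c where "c = 1 + (\<Sum>i=1..n. lam i)"
  have c0: "c \<noteq> 0" unfolding c_def using L by (metis add.commute add_eq_0_iff)
  have ac: "\<alpha> c \<noteq> 0" using mchars_nz[OF a c0] .
  define C0 where "C0 = 1 / (1 - of_nat CARD('a)) ^ n * (- (1 / gauss \<psi> (chmul \<alpha> \<alpha>)))"
  define LA where "LA i y = (\<Sum>v\<in>mchars. poch \<psi> (\<beta> i) v / (poch0 \<psi> (chmul (\<beta> i) (\<beta> i)) v * poch0 \<psi> eps v) * v y)" for i y
  define LC where "LC i x = (\<Sum>v\<in>mchars. v (x^2 / 4) / (poch0 \<psi> (chmul (\<beta> i) qchar) v * poch0 \<psi> eps v))" for i x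
  have st: "LC i x = \<psi> x * LA i (2 * x)" if "i \<in> {1..n}" for i x
    unfolding LC_def LA_def using bs that by (intro star) auto
  have FCe: "FC \<psi> n \<alpha> (chmul \<alpha> qchar) (\<lambda>i. chmul (\<beta> i) qchar) (\<lambda>i. (lam i)^2)
      = C0 * (\<Sum>s\<in>UNIV. \<psi> s * (\<alpha> s * \<alpha> s) * (\<Prod>i\<in>{1..n}. LC i (s * lam i)))"
    unfolding C0_def LC_def using FC_red[OF a n] by (simp only: mult.assoc)
  have FAe: "FA \<psi> n (chmul \<alpha> \<alpha>) \<beta> (\<lambda>i. chmul (\<beta> i) (\<beta> i)) (\<lambda>i. 2 * lam i / c)
      = C0 * (\<Sum>s\<in>UNIV. \<psi> s * (\<alpha> s * \<alpha> s) * (\<Prod>i\<in>{1..n}. LA i (s * (2 * lam i / c))))"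
    unfolding C0_def LA_def using FA_red[OF a n, of \<beta> "\<lambda>i. 2 * lam i / c"] by (simp only: mult.assoc)
  have "(chinv \<alpha> c)^2 * FA \<psi> n (chmul \<alpha> \<alpha>) \<beta> (\<lambda>i. chmul (\<beta> i) (\<beta> i)) (\<lambda>i. 2 * lam i / c)
      = C0 * (\<Sum>s\<in>UNIV. (inverse (\<alpha> c))^2 * (\<psi> s * (\<alpha> s * \<alpha> s) * (\<Prod>i\<in>{1..n}. LA i (s * (2 * lam i / c)))))"
    unfolding FAe by (simp only: chinv_apply sum_distrib_left mult.left_commute)
  also have "(\<Sum>s\<in>UNIV. (inverse (\<alpha> c))^2 * (\<psi> s * (\<alpha> s * \<alpha> s) * (\<Prod>i\<in>{1..n}. LA i (s * (2 * lam i / c)))))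
      = (\<Sum>t\<in>UNIV. (inverse (\<alpha> c))^2 * (\<psi> (c * t) * (\<alpha> (c * t) * \<alpha> (c * t)) * (\<Prod>i\<in>{1..n}. LA i ((c * t) * (2 * lam i / c)))))"
    by (rule sum_bij_UNIV[symmetric]) (rule bijI2[where g = "\<lambda>x. x / c"], use c0 in auto)
  also have "\<dots> = (\<Sum>t\<in>UNIV. \<psi> t * (\<alpha> t * \<alpha> t) * (\<Prod>i\<in>{1..n}. LC i (t * lam i)))"
  proof (rule sum.cong[OF refl])
    fix t :: 'a
    have p1: "\<psi> (c * t) = \<psi> t * (\<Prod>i\<in>{1..n}. \<psi> (t * lam i))"
    proof -
      have "c * t = t + (\<Sum>i=1..n. t * lam i)" unfolding c_def by (simp add: algebra_simps sum_distrib_left)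
      thus ?thesis by (simp only: psi_add psi_sumI)
    qed
    have p2: "(inverse (\<alpha> c))^2 * (\<alpha> (c * t) * \<alpha> (c * t)) = \<alpha> t * \<alpha> t"
      using ac by (simp add: mchars_mult[OF a] power2_eq_square field_simps)
    have p3: "LA i ((c * t) * (2 * lam i / c)) = LA i (2 * (t * lam i))" for i
    proof -
      have "(c * t) * (2 * lam i / c) = 2 * (t * lam i)" using c0 by (simp add: field_simps)
      thus ?thesis by simp
    qed
    have p4: "(\<Prod>i\<in>{1..n}. LC i (t * lam i)) = (\<Prod>i\<in>{1..n}. \<psi> (t * lam i)) * (\<Prod>i\<in>{1..n}. LA i (2 * (t * lam i)))"
      by (simp only: prod.distrib[symmetric]) (rule prod.cong[OF refl], rule st)
    show "(inverse (\<alpha> c))^2 * (\<psi> (c * t) * (\<alpha> (c * t) * \<alpha> (c * t)) * (\<Prod>i\<in>{1..n}. LA i ((c * t) * (2 * lam i / c))))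
        = \<psi> t * (\<alpha> t * \<alpha> t) * (\<Prod>i\<in>{1..n}. LC i (t * lam i))"
    proof -
      have "(inverse (\<alpha> c))^2 * (\<psi> (c * t) * (\<alpha> (c * t) * \<alpha> (c * t)) * (\<Prod>i\<in>{1..n}. LA i ((c * t) * (2 * lam i / c))))
          = ((inverse (\<alpha> c))^2 * (\<alpha> (c * t) * \<alpha> (c * t))) * \<psi> (c * t) * (\<Prod>i\<in>{1..n}. LA i ((c * t) * (2 * lam i / c)))"
        by (simp only: mult_ac)
      also have "\<dots> = (\<alpha> t * \<alpha> t) * (\<psi> t * (\<Prod>i\<in>{1..n}. \<psi> (t * lam i))) * (\<Prod>i\<in>{1..n}. LA i (2 * (t * lam i)))"
        by (simp only: p1 p2 p3)
      also have "\<dots> = \<psi> t * (\<alpha> t * \<alpha> t) * (\<Prod>i\<in>{1..n}. LC i (t * lam i))"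
        by (simp only: p4 mult_ac)
      finally show ?thesis .
    qed
  qed
  finally have fin: "(chinv \<alpha> c)^2 * FA \<psi> n (chmul \<alpha> \<alpha>) \<beta> (\<lambda>i. chmul (\<beta> i) (\<beta> i)) (\<lambda>i. 2 * lam i / c)
      = C0 * (\<Sum>t\<in>UNIV. \<psi> t * (\<alpha> t * \<alpha> t) * (\<Prod>i\<in>{1..n}. LC i (t * lam i)))" .
  show ?thesis unfolding FCe c_def[symmetric] by (rule fin[symmetric])
qed
end


theorem theorem3p9:
  fixes \<psi> :: "'a::{finite,field} \<Rightarrow> complex"
    and n :: nat and \<alpha> :: "'a \<Rightarrow> complex" and \<beta> :: "nat \<Rightarrow> 'a \<Rightarrow> complex"
    and lam :: "nat \<Rightarrow> 'a"
  assumes "CHAR('a) \<noteq> 2"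
    and "nontriv_add_char \<psi>"
    and "n \<ge> 1"
    and "\<alpha> \<in> mchars"
    and "\<forall>i\<in>{1..n}. \<beta> i \<in> mchars \<and> \<beta> i \<noteq> eps"
    and "(\<Sum>i=1..n. lam i) \<noteq> -1"
  shows "FC \<psi> n \<alpha> (chmul \<alpha> qchar) (\<lambda>i. chmul (\<beta> i) qchar) (\<lambda>i. (lam i)^2)
       = (chinv \<alpha> (1 + (\<Sum>i=1..n. lam i)))^2 *
         FA \<psi> n (chmul \<alpha> \<alpha>) \<beta> (\<lambda>i. chmul (\<beta> i) (\<beta> i))
            (\<lambda>i. 2 * lam i / (1 + (\<Sum>j=1..n. lam j)))"
proof -
  have two: "(2::'a) \<noteq> 0"
  proof
    assume "(2::'a) = 0"
    hence "(of_nat 2 :: 'a) = 0" by simp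
    hence dv: "CHAR('a) dvd 2" by (simp only: of_nat_eq_0_iff_char_dvd)
    have "CHAR('a) \<noteq> 0" using dv by (metis dvd_0_left_iff zero_neq_numeral)
    hence "CHAR('a) \<le> 2" "CHAR('a) \<noteq> 0" using dv by (auto intro: dvd_imp_le)
    moreover have "CHAR('a) \<noteq> Suc 0" by (rule CHAR_not_1)
    ultimately have "CHAR('a) = 2" by linarith
    thus False using assms(1) by simp
  qed
  interpret ffc \<psi> using assms(2) two by unfold_locales
  show ?thesis by (rule main_loc[OF assms(4) assms(3) assms(5) assms(6)])
qed

end
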